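(* Consider the class of equations $$u_t+A(t)u_{xxxxx}+B(t)u_{xxx}+C(t)uu_{xxx}+E(t)uu_x+F(t)u_xu_{xx}+Q(t)u=0,\qquad (1)$$ regarded as a system together with the auxiliary conditions $A_x=A_u=B_x=B_u=C_x=C_u=E_x=E_u=F_x=F_u=Q_x=Q_u=0$ in the augmented space $(t,x,u,A,B,C,E,F,Q)$. The Lie algebra of infinitesimal equivalence transformations of this class, i.e. of vector fields $$Y=\tau\partial_t+\xi\partial_x+\eta\partial_u+\omega^1\partial_A+\omega^2\partial_B+\omega^3\partial_C+\omega^4\partial_E+\omega^5\partial_F+\omega^6\partial_Q,$$ with $\tau,\xi,\eta$ functions of $(t,x,u)$ and $\omega^i$ functions of $(t,x,u,A,B,C,E,F,Q)$, leaving this system invariant, is spanned by $$Y_1=x\partial_x+\tfrac12u\partial_u+5A\partial_A+3B\partial_B+\tfrac52C\partial_C+\tfrac12E\partial_E+\tfrac52F\partial_F,\qquad Y_2=\partial_x,$$ $$Y_\alpha=\alpha\partial_t-\alpha_tA\partial_A-\alpha_tB\partial_B-\alpha_tC\partial_C-\alpha_tE\partial_E-\alpha_tF\partial_F-\alpha_tQ\partial_Q,$$ $$Y_r=ru\partial_u-rC\partial_C-rE\partial_E-rF\partial_F-r_t\partial_Q,$$ where $\alpha=\alpha(t)$ and $r=r(t)$ are arbitrary smooth functions.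
   Context: $A,B,C,E,F,Q$ are smooth functions of $t$ only, with $A\neq0$ and $C\neq 0$. An equivalence transformation of the class (1) is a nondegenerate point transformation of $(t,x,u)$, extended to the arbitrary elements $A,\dots,Q$, which maps every equation of the class (1) to an equation of the same form (1) with possibly different coefficient functions; infinitesimal equivalence transformations are found by Lie's infinitesimal invariance criterion applied to (1) together with the auxiliary system stated in the claim. *)

theory Defs
  imports "HOL-Analysis.Analysis"
begin

fun Ck :: "nat \<Rightarrow> ('a::real_normed_vector \<Rightarrow> 'b::real_normed_vector) \<Rightarrow> bool" where
  "Ck 0 f = continuous_on UNIV f"
| "Ck (Suc k) f = (continuous_on UNIV f \<and> (\<forall>z. f differentiable (at z)) \<and>
      (\<forall>v. Ck k (\<lambda>z. frechet_derivative f (at z) v)))"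

definition smooth :: "('a::real_normed_vector \<Rightarrow> 'b::real_normed_vector) \<Rightarrow> bool" where
  "smooth f \<longleftrightarrow> (\<forall>k. Ck k f)"

definition pdt :: "(real \<Rightarrow> real \<Rightarrow> real) \<Rightarrow> real \<Rightarrow> real \<Rightarrow> real" where
  "pdt f t x = deriv (\<lambda>s. f s x) t"

definition pdx :: "(real \<Rightarrow> real \<Rightarrow> real) \<Rightarrow> real \<Rightarrow> real \<Rightarrow> real" where
  "pdx f t x = deriv (\<lambda>y. f t y) x"

definition pdxn :: "nat \<Rightarrow> (real \<Rightarrow> real \<Rightarrow> real) \<Rightarrow> real \<Rightarrow> real \<Rightarrow> real" where
  "pdxn n f = (pdx ^^ n) f"

type_synonym fun3 = "real \<Rightarrow> real \<Rightarrow> real \<Rightarrow> real"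
type_synonym fun9 = "real \<Rightarrow> real \<Rightarrow> real \<Rightarrow> real \<Rightarrow> real \<Rightarrow> real \<Rightarrow> real \<Rightarrow> real \<Rightarrow> real \<Rightarrow> real"

definition charW :: "fun3 \<Rightarrow> fun3 \<Rightarrow> fun3 \<Rightarrow> (real \<Rightarrow> real \<Rightarrow> real) \<Rightarrow> real \<Rightarrow> real \<Rightarrow> real" where
  "charW tau xi eta u = (\<lambda>t x. eta t x (u t x) - tau t x (u t x) * pdt u t x - xi t x (u t x) * pdx u t x)"

definition eta_t :: "fun3 \<Rightarrow> fun3 \<Rightarrow> fun3 \<Rightarrow> (real \<Rightarrow> real \<Rightarrow> real) \<Rightarrow> real \<Rightarrow> real \<Rightarrow> real" where
  "eta_t tau xi eta u t x = pdt (charW tau xi eta u) t x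
      + tau t x (u t x) * pdt (pdt u) t x + xi t x (u t x) * pdx (pdt u) t x"

definition eta_xn :: "nat \<Rightarrow> fun3 \<Rightarrow> fun3 \<Rightarrow> fun3 \<Rightarrow> (real \<Rightarrow> real \<Rightarrow> real) \<Rightarrow> real \<Rightarrow> real \<Rightarrow> real" where
  "eta_xn n tau xi eta u t x = pdxn n (charW tau xi eta u) t x
      + tau t x (u t x) * pdxn n (pdt u) t x + xi t x (u t x) * pdxn (Suc n) u t x"

definition eqn1 :: "(real \<Rightarrow> real) \<Rightarrow> (real \<Rightarrow> real) \<Rightarrow> (real \<Rightarrow> real) \<Rightarrow> (real \<Rightarrow> real) \<Rightarrow>
    (real \<Rightarrow> real) \<Rightarrow> (real \<Rightarrow> real) \<Rightarrow> (real \<Rightarrow> real \<Rightarrow> real) \<Rightarrow> real \<Rightarrow> real \<Rightarrow> real" where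
  "eqn1 A B C E F Q u t x =
     pdt u t x + A t * pdxn 5 u t x + B t * pdxn 3 u t x + C t * u t x * pdxn 3 u t x
     + E t * u t x * pdx u t x + F t * pdx u t x * pdxn 2 u t x + Q t * u t x"

text \<open>Action of the prolonged vector field on the left-hand side of (1), evaluated on the jet
  of u at (t,x), with arbitrary elements taking the values A t, ..., Q t.\<close>
definition prY_eqn1 :: "fun3 \<Rightarrow> fun3 \<Rightarrow> fun3 \<Rightarrow> fun9 \<Rightarrow> fun9 \<Rightarrow> fun9 \<Rightarrow> fun9 \<Rightarrow> fun9 \<Rightarrow> fun9 \<Rightarrow>
    (real \<Rightarrow> real) \<Rightarrow> (real \<Rightarrow> real) \<Rightarrow> (real \<Rightarrow> real) \<Rightarrow> (real \<Rightarrow> real) \<Rightarrow>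
    (real \<Rightarrow> real) \<Rightarrow> (real \<Rightarrow> real) \<Rightarrow> (real \<Rightarrow> real \<Rightarrow> real) \<Rightarrow> real \<Rightarrow> real \<Rightarrow> real" where
  "prY_eqn1 tau xi eta w1 w2 w3 w4 w5 w6 A B C E F Q u t x =
    (let U = u t x; u1 = pdx u t x; u2 = pdxn 2 u t x; u3 = pdxn 3 u t x; u5 = pdxn 5 u t x;
         ev = (\<lambda>w. w t x U (A t) (B t) (C t) (E t) (F t) (Q t));
         et = eta t x U in
     eta_t tau xi eta u t x
     + ev w1 * u5 + A t * eta_xn 5 tau xi eta u t x
     + ev w2 * u3 + B t * eta_xn 3 tau xi eta u t x
     + ev w3 * U * u3 + C t * et * u3 + C t * U * eta_xn 3 tau xi eta u t x
     + ev w4 * U * u1 + E t * et * u1 + E t * U * eta_xn 1 tau xi eta u t x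
     + ev w5 * u1 * u2 + F t * eta_xn 1 tau xi eta u t x * u2 + F t * u1 * eta_xn 2 tau xi eta u t x
     + ev w6 * U + Q t * et)"

text \<open>Prolongation coefficients of Y for the first derivatives theta_x, theta_u of an arbitrary
  element theta (the i-th one), evaluated at a point of the manifold of the auxiliary system,
  i.e. along arbitrary elements depending on t only:
  omega_{theta,z} = D_z omega - theta_t D_z tau - theta_x D_z xi - theta_u D_z eta, z in {x,u}.\<close>
definition om_x :: "fun3 \<Rightarrow> fun9 \<Rightarrow> (real \<Rightarrow> real) \<Rightarrow> (real \<Rightarrow> real) \<Rightarrow> (real \<Rightarrow> real) \<Rightarrow> (real \<Rightarrow> real) \<Rightarrow>
    (real \<Rightarrow> real) \<Rightarrow> (real \<Rightarrow> real) \<Rightarrow> (real \<Rightarrow> real) \<Rightarrow> real \<Rightarrow> real \<Rightarrow> real \<Rightarrow> real" where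
  "om_x tau w theta A B C E F Q t x u =
     deriv (\<lambda>y. w t y u (A t) (B t) (C t) (E t) (F t) (Q t)) x
     - deriv theta t * deriv (\<lambda>y. tau t y u) x"

definition om_u :: "fun3 \<Rightarrow> fun9 \<Rightarrow> (real \<Rightarrow> real) \<Rightarrow> (real \<Rightarrow> real) \<Rightarrow> (real \<Rightarrow> real) \<Rightarrow> (real \<Rightarrow> real) \<Rightarrow>
    (real \<Rightarrow> real) \<Rightarrow> (real \<Rightarrow> real) \<Rightarrow> (real \<Rightarrow> real) \<Rightarrow> real \<Rightarrow> real \<Rightarrow> real \<Rightarrow> real" where
  "om_u tau w theta A B C E F Q t x u =
     deriv (\<lambda>v. w t x v (A t) (B t) (C t) (E t) (F t) (Q t)) u
     - deriv theta t * deriv (\<lambda>v. tau t x v) u"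

text \<open>Lie's infinitesimal invariance criterion for the system (1) + auxiliary conditions,
  on the domain A \<noteq> 0, C \<noteq> 0 of the class.  Every jet point of the system is realised by
  smooth functions u(t,x) and A(t),...,Q(t), so the criterion is stated along such functions.\<close>
definition inf_equiv_transf :: "fun3 \<Rightarrow> fun3 \<Rightarrow> fun3 \<Rightarrow> fun9 \<Rightarrow> fun9 \<Rightarrow> fun9 \<Rightarrow> fun9 \<Rightarrow> fun9 \<Rightarrow> fun9 \<Rightarrow> bool" where
  "inf_equiv_transf tau xi eta w1 w2 w3 w4 w5 w6 \<longleftrightarrow>
    (\<forall>A B C E F Q. smooth A \<and> smooth B \<and> smooth C \<and> smooth E \<and> smooth F \<and> smooth Q \<longrightarrow>
      (\<forall>u t x. smooth (\<lambda>(p::real\<times>real). u (fst p) (snd p)) \<and> A t \<noteq> 0 \<and> C t \<noteq> 0 \<and>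
               eqn1 A B C E F Q u t x = 0 \<longrightarrow>
               prY_eqn1 tau xi eta w1 w2 w3 w4 w5 w6 A B C E F Q u t x = 0) \<and>
      (\<forall>t x u. A t \<noteq> 0 \<and> C t \<noteq> 0 \<longrightarrow>
         (\<forall>(w, theta) \<in> {(w1, A), (w2, B), (w3, C), (w4, E), (w5, F), (w6, Q)}.
            om_x tau w theta A B C E F Q t x u = 0 \<and> om_u tau w theta A B C E F Q t x u = 0)))"

end

theory Submission
  imports Defs
begin

lemma Ck_Suc_imp: "Ck (Suc k) f \<Longrightarrow> Ck k f"
proof (induction k arbitrary: f)
  case 0 thus ?case by simp
next
  case (Suc k) thus ?case by (metis Ck.simps(2))
qed

lemma smooth_Ck: "smooth f \<Longrightarrow> Ck k f" by (simp add: smooth_def)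

lemma smooth_cont: "smooth f \<Longrightarrow> continuous_on UNIV f"
  using smooth_Ck[of f 0] by simp

lemma smooth_differentiable: "smooth f \<Longrightarrow> f differentiable (at z)"
  using smooth_Ck[of f 1] by simp

lemma smooth_has_fd: "smooth f \<Longrightarrow> (f has_derivative frechet_derivative f (at z)) (at z)"
  using smooth_differentiable frechet_derivative_works by blast

lemma smooth_fd: "smooth f \<Longrightarrow> smooth (\<lambda>z. frechet_derivative f (at z) v)"
  unfolding smooth_def by (metis Ck.simps(2))

lemma Ck_const: "Ck k (\<lambda>z. c)"
  by (induction k arbitrary: c) (auto simp: continuous_on_const)

lemma smooth_const[simp, intro]: "smooth (\<lambda>z. c)"
  by (simp add: smooth_def Ck_const)

lemma Ck_affine:
  assumes L: "bounded_linear L"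
  shows "Ck k f \<Longrightarrow> Ck k (\<lambda>z. f (L z + c))"
proof (induction k arbitrary: f)
  case 0
  have "continuous_on UNIV (\<lambda>z. L z + c)"
    by (intro continuous_intros linear_continuous_on L)
  moreover have "continuous_on UNIV f" using 0 by simp
  ultimately show ?case using continuous_on_compose2[of UNIV f UNIV "\<lambda>z. L z + c"] by auto
next
  case (Suc k)
  have cf: "continuous_on UNIV f" and df: "\<And>z. f differentiable (at z)"
    and Dk: "\<And>v. Ck k (\<lambda>z. frechet_derivative f (at z) v)" using Suc.prems by auto
  have hd: "((\<lambda>z. f (L z + c)) has_derivative (\<lambda>h. frechet_derivative f (at (L z + c)) (L h))) (at z)" for z
  proof -
    have "((\<lambda>z. L z + c) has_derivative L) (at z)"
      using L by (auto intro!: derivative_eq_intros bounded_linear.has_derivative[OF L, of "\<lambda>x. x" "\<lambda>x. x"])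
    moreover have "(f has_derivative frechet_derivative f (at (L z + c))) (at (L z + c))"
      using df frechet_derivative_works by blast
    ultimately show ?thesis using has_derivative_compose[of "\<lambda>z. L z + c" L z UNIV f] by auto
  qed
  have fd: "frechet_derivative (\<lambda>z. f (L z + c)) (at z) = (\<lambda>h. frechet_derivative f (at (L z + c)) (L h))" for z
    using hd frechet_derivative_at by metis
  have "continuous_on UNIV (\<lambda>z. f (L z + c))"
  proof -
    have "continuous_on UNIV (\<lambda>z. L z + c)"
      by (intro continuous_intros linear_continuous_on L)
    thus ?thesis using cf continuous_on_compose2[of UNIV f UNIV "\<lambda>z. L z + c"] by auto
  qed
  moreover have "\<forall>z. (\<lambda>z. f (L z + c)) differentiable (at z)"
    using hd differentiable_def by blast
  moreover have "\<forall>v. Ck k (\<lambda>z. frechet_derivative (\<lambda>z. f (L z + c)) (at z) v)"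
    unfolding fd using Suc.IH[OF Dk] by simp
  ultimately show ?case by simp
qed

lemma smooth_affine: "bounded_linear L \<Longrightarrow> smooth f \<Longrightarrow> smooth (\<lambda>z. f (L z + c))"
  by (simp add: smooth_def Ck_affine)

lemma Ck_id: "Ck k (\<lambda>z. z)"
  by (induction k) (auto simp: Ck_const)

lemma smooth_id: "smooth (\<lambda>z. z)" by (simp add: smooth_def Ck_id)

lemma smooth_linear: "bounded_linear L \<Longrightarrow> smooth L"
  using smooth_affine[of L "\<lambda>z. z" 0] smooth_id by simp

lemma Ck_add_mult:
  fixes f g :: "'a::real_normed_vector \<Rightarrow> real"
  shows "Ck k f \<Longrightarrow> Ck k g \<Longrightarrow> Ck k (\<lambda>z. f z + g z) \<and> Ck k (\<lambda>z. f z * g z)"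
proof (induction k arbitrary: f g)
  case 0 thus ?case by (auto intro!: continuous_intros)
next
  case (Suc k)
  have cf: "continuous_on UNIV f" and df: "\<And>z. f differentiable (at z)"
    and Df: "\<And>v. Ck k (\<lambda>z. frechet_derivative f (at z) v)" using Suc.prems by auto
  have cg: "continuous_on UNIV g" and dg: "\<And>z. g differentiable (at z)"
    and Dg: "\<And>v. Ck k (\<lambda>z. frechet_derivative g (at z) v)" using Suc.prems by auto
  have fk: "Ck k f" "Ck k g" using Suc.prems Ck_Suc_imp by auto
  have hf: "(f has_derivative frechet_derivative f (at z)) (at z)" for z using df frechet_derivative_works by blast
  have hg: "(g has_derivative frechet_derivative g (at z)) (at z)" for z using dg frechet_derivative_works by blast
  have had: "((\<lambda>z. f z + g z) has_derivative (\<lambda>h. frechet_derivative f (at z) h + frechet_derivative g (at z) h)) (at z)" for z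
    using has_derivative_add[OF hf hg] .
  have hmd: "((\<lambda>z. f z * g z) has_derivative (\<lambda>h. f z * frechet_derivative g (at z) h + frechet_derivative f (at z) h * g z)) (at z)" for z
    using has_derivative_mult[OF hf hg] .
  have fda: "frechet_derivative (\<lambda>z. f z + g z) (at z) = (\<lambda>h. frechet_derivative f (at z) h + frechet_derivative g (at z) h)" for z
    using had frechet_derivative_at by metis
  have fdm: "frechet_derivative (\<lambda>z. f z * g z) (at z) = (\<lambda>h. f z * frechet_derivative g (at z) h + frechet_derivative f (at z) h * g z)" for z
    using hmd frechet_derivative_at by metis
  have A: "Ck (Suc k) (\<lambda>z. f z + g z)"
  proof -
    have "\<forall>v. Ck k (\<lambda>z. frechet_derivative (\<lambda>z. f z + g z) (at z) v)"
      unfolding fda using Suc.IH[OF Df Dg] by blast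
    moreover have "continuous_on UNIV (\<lambda>z. f z + g z)" using cf cg by (intro continuous_intros)
    moreover have "\<forall>z. (\<lambda>z. f z + g z) differentiable (at z)" using had differentiable_def by blast
    ultimately show ?thesis by simp
  qed
  have B: "Ck (Suc k) (\<lambda>z. f z * g z)"
  proof -
    have "Ck k (\<lambda>z. f z * frechet_derivative g (at z) v + frechet_derivative f (at z) v * g z)" for v
    proof -
      have 1: "Ck k (\<lambda>z. f z * frechet_derivative g (at z) v)" using Suc.IH[OF fk(1) Dg] by blast
      have 2: "Ck k (\<lambda>z. frechet_derivative f (at z) v * g z)" using Suc.IH[OF Df fk(2)] by blast
      show ?thesis using Suc.IH[OF 1 2] by blast
    qed
    hence "\<forall>v. Ck k (\<lambda>z. frechet_derivative (\<lambda>z. f z * g z) (at z) v)"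
      unfolding fdm by blast
    moreover have "continuous_on UNIV (\<lambda>z. f z * g z)" using cf cg by (intro continuous_intros)
    moreover have "\<forall>z. (\<lambda>z. f z * g z) differentiable (at z)" using hmd differentiable_def by blast
    ultimately show ?thesis by simp
  qed
  show ?case using A B by blast
qed

lemma smooth_add[intro]:
  fixes f g :: "'a::real_normed_vector \<Rightarrow> real"
  shows "smooth f \<Longrightarrow> smooth g \<Longrightarrow> smooth (\<lambda>z. f z + g z)"
  by (simp add: smooth_def Ck_add_mult)

lemma smooth_mult[intro]:
  fixes f g :: "'a::real_normed_vector \<Rightarrow> real"
  shows "smooth f \<Longrightarrow> smooth g \<Longrightarrow> smooth (\<lambda>z. f z * g z)"
  by (simp add: smooth_def Ck_add_mult)

lemma smooth_diff[intro]:
  fixes f g :: "'a::real_normed_vector \<Rightarrow> real"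
  shows "smooth f \<Longrightarrow> smooth g \<Longrightarrow> smooth (\<lambda>z. f z - g z)"
proof -
  assume "smooth f" "smooth g"
  hence "smooth (\<lambda>z. f z + (-1) * g z)" by (intro smooth_add smooth_mult smooth_const)
  thus ?thesis by simp
qed

lemma smooth_fst[intro]: "smooth (\<lambda>w::real\<times>real. fst w)"
  by (rule smooth_linear) (rule bounded_linear_fst)
lemma smooth_snd[intro]: "smooth (\<lambda>w::real\<times>real. snd w)"
  by (rule smooth_linear) (rule bounded_linear_snd)

lemma smooth_comp_fst[intro]: "smooth (h::real\<Rightarrow>real) \<Longrightarrow> smooth (\<lambda>w::real\<times>real. h (fst w))"
  using smooth_affine[of fst h 0] bounded_linear_fst by simp

lemma smooth_real_ident[intro]: "smooth (\<lambda>x::real. x)" by (rule smooth_id)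

lemma smooth1_deriv_fd:
  fixes h :: "real \<Rightarrow> real"
  assumes "smooth h" shows "frechet_derivative h (at x) v = deriv h x * v"
proof -
  have "h differentiable (at x)" using assms smooth_differentiable by blast
  hence "DERIV h x :> deriv h x" using DERIV_deriv_iff_real_differentiable by blast
  hence "(h has_derivative (*) (deriv h x)) (at x)" by (simp add: has_field_derivative_def)
  thus ?thesis using frechet_derivative_at by metis
qed

lemma smooth1_DERIV: "smooth (h::real\<Rightarrow>real) \<Longrightarrow> DERIV h x :> deriv h x"
  using smooth_differentiable DERIV_deriv_iff_real_differentiable by blast

lemma smooth1_deriv: "smooth (h::real\<Rightarrow>real) \<Longrightarrow> smooth (deriv h)"
proof -
  assume h: "smooth h"
  have "smooth (\<lambda>z. frechet_derivative h (at z) 1)" using smooth_fd[OF h] .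
  moreover have "(\<lambda>z. frechet_derivative h (at z) 1) = deriv h"
    using smooth1_deriv_fd[OF h] by auto
  ultimately show ?thesis by simp
qed


definition D1 :: "(real\<times>real \<Rightarrow> real) \<Rightarrow> real\<times>real \<Rightarrow> real" where
  "D1 F w = frechet_derivative F (at w) (1,0)"
definition D2 :: "(real\<times>real \<Rightarrow> real) \<Rightarrow> real\<times>real \<Rightarrow> real" where
  "D2 F w = frechet_derivative F (at w) (0,1)"

lemma smooth_D1[intro]: "smooth F \<Longrightarrow> smooth (D1 F)"
  using smooth_fd[of F "(1,0)"] unfolding D1_def[abs_def] by simp
lemma smooth_D2[intro]: "smooth F \<Longrightarrow> smooth (D2 F)"
  using smooth_fd[of F "(0,1)"] unfolding D2_def[abs_def] by simp

lemma lin_pair: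
  fixes F' :: "real\<times>real \<Rightarrow> real" and a b :: real
  assumes "linear F'"
  shows "F' (a, b) = a * F' (1,0) + b * F' (0,1)"
proof -
  have "(a,b) = a *\<^sub>R (1::real,0::real) + b *\<^sub>R (0,1)" by simp
  hence "F' (a,b) = F' (a *\<^sub>R (1,0) + b *\<^sub>R (0,1))" by simp
  also have "\<dots> = a * F' (1,0) + b * F' (0,1)"
    by (simp only: real_vector.linear_add[OF assms] linear_cmul[OF assms] real_scaleR_def)
  finally show ?thesis .
qed

lemma chain2:
  assumes F: "smooth F" and P: "(P has_real_derivative P') (at y)"
  shows "((\<lambda>y. F (y, P y)) has_real_derivative (D1 F (y, P y) + D2 F (y, P y) * P')) (at y)"
proof -
  let ?F' = "frechet_derivative F (at (y, P y))"
  have hF: "(F has_derivative ?F') (at (y, P y))" using smooth_has_fd[OF F] .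
  have lin: "linear ?F'" using hF has_derivative_linear by blast
  have hp: "((\<lambda>y. (y, P y)) has_derivative (\<lambda>h. (h, P' * h))) (at y)"
    by (rule has_derivative_Pair[OF has_derivative_ident]) (use P in \<open>simp add: has_field_derivative_def\<close>)
  have "((\<lambda>y. F (y, P y)) has_derivative (\<lambda>h. ?F' (h, P' * h))) (at y)"
    using has_derivative_compose[OF hp, of F ?F'] hF by simp
  moreover have "(\<lambda>h. ?F' (h, P' * h)) = (*) (D1 F (y, P y) + D2 F (y, P y) * P')"
  proof
    fix h show "?F' (h, P' * h) = (D1 F (y, P y) + D2 F (y, P y) * P') * h"
      by (subst lin_pair[OF lin]) (simp add: D1_def D2_def algebra_simps)
  qed
  ultimately show ?thesis by (simp add: has_field_derivative_def)
qed

lemma partial2_has: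
  assumes F: "smooth F"
  shows "((\<lambda>z. F (a, z)) has_real_derivative D2 F (a, z)) (at z)"
proof -
  let ?F' = "frechet_derivative F (at (a, z))"
  have hF: "(F has_derivative ?F') (at (a, z))" using smooth_has_fd[OF F] .
  have lin: "linear ?F'" using hF has_derivative_linear by blast
  have hp: "((\<lambda>z. (a, z)) has_derivative (\<lambda>h. (0, h))) (at z)"
    by (rule has_derivative_Pair[OF has_derivative_const has_derivative_ident])
  have "((\<lambda>z. F (a, z)) has_derivative (\<lambda>h. ?F' (0, h))) (at z)"
    using has_derivative_compose[OF hp, of F ?F'] hF by simp
  moreover have "(\<lambda>h. ?F' (0, h)) = (*) (D2 F (a,z))"
  proof
    fix h show "?F' (0, h) = D2 F (a,z) * h"
      by (subst lin_pair[OF lin]) (simp add: D1_def D2_def algebra_simps)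
  qed
  ultimately show ?thesis by (simp add: has_field_derivative_def)
qed

lemma partial1_has:
  assumes F: "smooth F"
  shows "((\<lambda>s. F (s, b)) has_real_derivative D1 F (s, b)) (at s)"
proof -
  let ?F' = "frechet_derivative F (at (s, b))"
  have hF: "(F has_derivative ?F') (at (s, b))" using smooth_has_fd[OF F] .
  have lin: "linear ?F'" using hF has_derivative_linear by blast
  have hp: "((\<lambda>s. (s, b)) has_derivative (\<lambda>h. (h, 0))) (at s)"
    by (rule has_derivative_Pair[OF has_derivative_ident has_derivative_const])
  have "((\<lambda>s. F (s, b)) has_derivative (\<lambda>h. ?F' (h, 0))) (at s)"
    using has_derivative_compose[OF hp, of F ?F'] hF by simp
  moreover have "(\<lambda>h. ?F' (h, 0)) = (*) (D1 F (s,b))"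
  proof
    fix h show "?F' (h, 0) = D1 F (s,b) * h"
      by (subst lin_pair[OF lin]) (simp add: D1_def D2_def algebra_simps)
  qed
  ultimately show ?thesis by (simp add: has_field_derivative_def)
qed

lemma D2_deriv: "smooth F \<Longrightarrow> D2 F (a, b) = deriv (\<lambda>z. F (a, z)) b"
  using partial2_has DERIV_imp_deriv by metis
lemma D1_deriv: "smooth F \<Longrightarrow> D1 F (a, b) = deriv (\<lambda>s. F (s, b)) a"
  using partial1_has DERIV_imp_deriv by metis

lemma mvt_rect:
  assumes F: "smooth F" and h: "h > 0"
  shows "\<exists>s1 y1 s2 y2. t < s1 \<and> s1 < t + h \<and> x < y1 \<and> y1 < x + h \<and>
          t < s2 \<and> s2 < t + h \<and> x < y2 \<and> y2 < x + h \<and>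
          D2 (D1 F) (s1, y1) = D1 (D2 F) (s2, y2)"
proof -
  define \<Delta> where "\<Delta> = F (t+h, x+h) - F (t+h, x) - F (t, x+h) + F (t, x)"
  have s1: "\<exists>s1. t < s1 \<and> s1 < t + h \<and> (\<lambda>s. F (s, x+h) - F (s, x)) (t+h) - (\<lambda>s. F (s, x+h) - F (s, x)) t
            = (t + h - t) * (D1 F (s1, x+h) - D1 F (s1, x))"
    by (rule MVT2) (use h in \<open>auto intro!: derivative_eq_intros partial1_has[OF F]\<close>)
  then obtain s1 where s1: "t < s1" "s1 < t + h" "\<Delta> = h * (D1 F (s1, x+h) - D1 F (s1, x))"
    unfolding \<Delta>_def by auto
  have "\<exists>y1. x < y1 \<and> y1 < x + h \<and> D1 F (s1, x+h) - D1 F (s1, x) = (x + h - x) * D2 (D1 F) (s1, y1)"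
    by (rule MVT2) (use h in \<open>auto intro!: partial2_has smooth_D1 F\<close>)
  then obtain y1 where y1: "x < y1" "y1 < x + h" "D1 F (s1, x+h) - D1 F (s1, x) = h * D2 (D1 F) (s1, y1)"
    by auto
  have "\<exists>y2. x < y2 \<and> y2 < x + h \<and> (\<lambda>y. F (t+h, y) - F (t, y)) (x+h) - (\<lambda>y. F (t+h, y) - F (t, y)) x
            = (x + h - x) * (D2 F (t+h, y2) - D2 F (t, y2))"
    by (rule MVT2) (use h in \<open>auto intro!: derivative_eq_intros partial2_has[OF F]\<close>)
  then obtain y2 where y2: "x < y2" "y2 < x + h" "\<Delta> = h * (D2 F (t+h, y2) - D2 F (t, y2))"
    unfolding \<Delta>_def by (auto simp: algebra_simps)
  have "\<exists>s2. t < s2 \<and> s2 < t + h \<and> D2 F (t+h, y2) - D2 F (t, y2) = (t + h - t) * D1 (D2 F) (s2, y2)"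
    by (rule MVT2) (use h in \<open>auto intro!: partial1_has smooth_D2 F\<close>)
  then obtain s2 where s2: "t < s2" "s2 < t + h" "D2 F (t+h, y2) - D2 F (t, y2) = h * D1 (D2 F) (s2, y2)"
    by auto
  have "h * (h * D2 (D1 F) (s1, y1)) = h * (h * D1 (D2 F) (s2, y2))"
    using s1(3) y1(3) y2(3) s2(3) by auto
  hence "D2 (D1 F) (s1, y1) = D1 (D2 F) (s2, y2)" using h by simp
  thus ?thesis using s1 y1 s2 y2 by blast
qed

lemma dist_pair_le: "dist (a::real, b::real) (c, d) \<le> dist a c + dist b d"
proof -
  have "sqrt ((dist a c)\<^sup>2 + (dist b d)\<^sup>2) \<le> sqrt ((dist a c + dist b d)\<^sup>2)"
    by (rule real_sqrt_le_mono) (simp add: power2_eq_square algebra_simps)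
  thus ?thesis by (simp add: dist_Pair_Pair)
qed

lemma schwarz:
  assumes F: "smooth F"
  shows "D1 (D2 F) w = D2 (D1 F) w"
proof (rule ccontr)
  assume ne: "D1 (D2 F) w \<noteq> D2 (D1 F) w"
  obtain t x where w: "w = (t, x)" by (cases w)
  define e where "e = \<bar>D1 (D2 F) w - D2 (D1 F) w\<bar> / 2"
  have e: "e > 0" using ne by (simp add: e_def)
  have cA: "continuous (at w) (D1 (D2 F))"
    using smooth_cont[OF smooth_D1[OF smooth_D2[OF F]]] continuous_on_eq_continuous_at[of UNIV] by auto
  have cB: "continuous (at w) (D2 (D1 F))"
    using smooth_cont[OF smooth_D2[OF smooth_D1[OF F]]] continuous_on_eq_continuous_at[of UNIV] by auto
  obtain d1 where d1: "d1 > 0" "\<And>z. dist z w < d1 \<Longrightarrow> dist (D1 (D2 F) z) (D1 (D2 F) w) < e"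
    using cA e unfolding continuous_at_eps_delta by blast
  obtain d2 where d2: "d2 > 0" "\<And>z. dist z w < d2 \<Longrightarrow> dist (D2 (D1 F) z) (D2 (D1 F) w) < e"
    using cB e unfolding continuous_at_eps_delta by blast
  define h where "h = min d1 d2 / 2"
  have h: "h > 0" using d1 d2 by (simp add: h_def)
  obtain s1 y1 s2 y2 where r: "t < s1" "s1 < t + h" "x < y1" "y1 < x + h"
          "t < s2" "s2 < t + h" "x < y2" "y2 < x + h"
          "D2 (D1 F) (s1, y1) = D1 (D2 F) (s2, y2)"
    using mvt_rect[OF F h, of t x] by blast
  have "s1 - t + (y1 - x) < min d1 d2" using r unfolding h_def by linarith
  hence "dist (s1, y1) w < min d1 d2"
    using dist_pair_le[of s1 y1 t x] r w by (simp add: dist_real_def)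
  hence 1: "dist (D2 (D1 F) (s1, y1)) (D2 (D1 F) w) < e" using d2 by simp
  have "s2 - t + (y2 - x) < min d1 d2" using r unfolding h_def by linarith
  hence "dist (s2, y2) w < min d1 d2"
    using dist_pair_le[of s2 y2 t x] r w by (simp add: dist_real_def)
  hence 2: "dist (D1 (D2 F) (s2, y2)) (D1 (D2 F) w) < e" using d1 by simp
  have abs_lem: "\<And>X Y A B. \<bar>(X::real) - B\<bar> < \<bar>A - B\<bar> / 2 \<Longrightarrow> \<bar>Y - A\<bar> < \<bar>A - B\<bar> / 2 \<Longrightarrow> X = Y \<Longrightarrow> False"
    by (simp add: abs_if split: if_splits)
  show False using abs_lem[OF 1[unfolded e_def dist_real_def] 2[unfolded e_def dist_real_def] r(9)] .
qed

definition U2 :: "(real \<Rightarrow> real \<Rightarrow> real) \<Rightarrow> real\<times>real \<Rightarrow> real" where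
  "U2 u = (\<lambda>p. u (fst p) (snd p))"

lemma pdx_D2: "smooth (U2 u) \<Longrightarrow> pdx u t x = D2 (U2 u) (t, x)"
  using D2_deriv[of "U2 u" t x] by (simp add: pdx_def U2_def)
lemma pdt_D1: "smooth (U2 u) \<Longrightarrow> pdt u t x = D1 (U2 u) (t, x)"
  using D1_deriv[of "U2 u" t x] by (simp add: pdt_def U2_def)

lemma U2_pdx: "smooth (U2 u) \<Longrightarrow> U2 (pdx u) = D2 (U2 u)"
  by (rule ext) (simp add: U2_def pdx_D2)
lemma U2_pdt: "smooth (U2 u) \<Longrightarrow> U2 (pdt u) = D1 (U2 u)"
  by (rule ext) (simp add: U2_def pdt_D1)

lemma smooth_pdx[intro]: "smooth (U2 u) \<Longrightarrow> smooth (U2 (pdx u))"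
  by (simp add: U2_pdx smooth_D2)
lemma smooth_pdt[intro]: "smooth (U2 u) \<Longrightarrow> smooth (U2 (pdt u))"
  by (simp add: U2_pdt smooth_D1)

lemma has_pdx: "smooth (U2 u) \<Longrightarrow> ((\<lambda>y. u t y) has_real_derivative pdx u t y) (at y)"
  using partial2_has[of "U2 u" t y] by (simp add: U2_def pdx_D2)
lemma has_pdt: "smooth (U2 u) \<Longrightarrow> ((\<lambda>s. u s x) has_real_derivative pdt u s x) (at s)"
  using partial1_has[of "U2 u", where s=s and b=x] by (simp add: U2_def pdt_D1)

lemma schwarz_u: assumes "smooth (U2 u)" shows "pdt (pdx u) t x = pdx (pdt u) t x"
proof -
  have "pdt (pdx u) t x = D1 (U2 (pdx u)) (t,x)" by (rule pdt_D1[OF smooth_pdx[OF assms]])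
  also have "\<dots> = D1 (D2 (U2 u)) (t,x)" by (simp add: U2_pdx[OF assms])
  also have "\<dots> = D2 (D1 (U2 u)) (t,x)" by (rule schwarz[OF assms])
  also have "\<dots> = D2 (U2 (pdt u)) (t,x)" by (simp add: U2_pdt[OF assms])
  also have "\<dots> = pdx (pdt u) t x" by (rule pdx_D2[symmetric], rule smooth_pdt[OF assms])
  finally show ?thesis .
qed

lemma pdxn_0[simp]: "pdxn 0 f = f" by (simp add: pdxn_def)
lemma pdxn_Suc: "pdxn (Suc n) f = pdx (pdxn n f)" by (simp add: pdxn_def)

lemma smooth_pdxn[intro]: "smooth (U2 u) \<Longrightarrow> smooth (U2 (pdxn n u))"
  by (induction n) (auto simp: pdxn_Suc)


lemma has_pdx_w: "smooth (U2 u) \<Longrightarrow> ((\<lambda>y. u t y) has_real_derivative pdx u t y) (at y within S)"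
  using has_pdx has_field_derivative_at_within by blast
lemma has_pdt_w: "smooth (U2 u) \<Longrightarrow> ((\<lambda>s. u s x) has_real_derivative pdt u s x) (at s within S)"
  using has_pdt has_field_derivative_at_within by blast
lemma smooth1_DERIV_w: "smooth (h::real\<Rightarrow>real) \<Longrightarrow> (h has_real_derivative deriv h x) (at x within S)"
  using smooth1_DERIV has_field_derivative_at_within by blast

lemma pdxn_lin:
  fixes f g h :: "real \<Rightarrow> real \<Rightarrow> real" and a b :: "real \<Rightarrow> real"
  assumes sf: "smooth (U2 f)" and sg: "smooth (U2 g)" and sh: "smooth (U2 h)"
  shows "pdxn n (\<lambda>t x. a t * f t x + b t * g t x - (c1 * x + c2) * h t x) =
    (\<lambda>t x. a t * pdxn n f t x + b t * pdxn n g t x - ((c1 * x + c2) * pdxn n h t x + real n * c1 * pdxn (n - 1) h t x))"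
proof (induction n)
  case 0 show ?case by simp
next
  case (Suc n)
  show ?case
  proof (rule ext, rule ext)
    fix t x
    have d: "((\<lambda>y. a t * pdxn n f t y + b t * pdxn n g t y - ((c1 * y + c2) * pdxn n h t y + real n * c1 * pdxn (n - 1) h t y))
       has_real_derivative (a t * pdx (pdxn n f) t x + b t * pdx (pdxn n g) t x - (c1 * pdxn n h t x + (c1 * x + c2) * pdx (pdxn n h) t x + real n * c1 * pdx (pdxn (n-1) h) t x))) (at x)"
      by (auto intro!: derivative_eq_intros has_pdx_w smooth_pdxn sf sg sh)
    have e: "real n * c1 * pdx (pdxn (n-1) h) t x = real n * c1 * pdxn n h t x"
      by (cases n) (auto simp: pdxn_Suc)
    have "pdxn (Suc n) (\<lambda>t x. a t * f t x + b t * g t x - (c1 * x + c2) * h t x) t x =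
       deriv (\<lambda>y. a t * pdxn n f t y + b t * pdxn n g t y - ((c1 * y + c2) * pdxn n h t y + real n * c1 * pdxn (n - 1) h t y)) x"
      unfolding pdxn_Suc Suc.IH pdx_def by simp
    also have "\<dots> = (a t * pdx (pdxn n f) t x + b t * pdx (pdxn n g) t x - (c1 * pdxn n h t x + (c1 * x + c2) * pdx (pdxn n h) t x + real n * c1 * pdx (pdxn (n-1) h) t x))"
      by (rule DERIV_imp_deriv[OF d])
    also have "\<dots> = a t * pdxn (Suc n) f t x + b t * pdxn (Suc n) g t x - ((c1 * x + c2) * pdxn (Suc n) h t x + real (Suc n) * c1 * pdxn (Suc n - 1) h t x)"
      unfolding e by (simp add: pdxn_Suc algebra_simps)
    finally show "pdxn (Suc n) (\<lambda>t x. a t * f t x + b t * g t x - (c1 * x + c2) * h t x) t x =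
      a t * pdxn (Suc n) f t x + b t * pdxn (Suc n) g t x - ((c1 * x + c2) * pdxn (Suc n) h t x + real (Suc n) * c1 * pdxn (Suc n - 1) h t x)" .
  qed
qed

lemma pdxn_1[simp]: "pdxn (Suc 0) f = pdx f" by (simp add: pdxn_Suc)

lemma pdxn_pdx: "pdxn n (pdx u) = pdxn (Suc n) u"
  by (simp add: pdxn_def funpow_Suc_right del: funpow.simps)

locale forms =
  fixes \<alpha> r :: "real \<Rightarrow> real" and c1 c2 :: real
    and tau xi eta :: "real \<Rightarrow> real \<Rightarrow> real \<Rightarrow> real"
  assumes sa: "smooth \<alpha>" and sr: "smooth r"
    and tau: "\<And>t x u. tau t x u = \<alpha> t"
    and xi: "\<And>t x u. xi t x u = c1 * x + c2"
    and eta: "\<And>t x u. eta t x u = c1 / 2 * u + r t * u"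
begin

lemma charW_eq: "charW tau xi eta u = (\<lambda>t x. (c1/2 + r t) * u t x + (- \<alpha> t) * pdt u t x - (c1 * x + c2) * pdx u t x)"
  by (auto simp: charW_def tau xi eta algebra_simps)

lemma eta_xn_eq:
  assumes su: "smooth (U2 u)" and n: "n \<ge> 1"
  shows "eta_xn n tau xi eta u t x = (c1/2 + r t - real n * c1) * pdxn n u t x"
proof -
  have "pdxn (n - 1) (pdx u) = pdxn n u" using n by (simp add: pdxn_pdx)
  thus ?thesis unfolding eta_xn_def charW_eq
      pdxn_lin[OF su smooth_pdt[OF su] smooth_pdx[OF su], where a="\<lambda>t. c1/2 + r t" and b="\<lambda>t. - \<alpha> t"]
    by (simp add: tau xi pdxn_pdx algebra_simps)
qed

lemma eta_t_eq:
  assumes su: "smooth (U2 u)"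
  shows "eta_t tau xi eta u t x = deriv r t * u t x + (c1/2 + r t - deriv \<alpha> t) * pdt u t x"
proof -
  have d: "((\<lambda>s. (c1/2 + r s) * u s x + (- \<alpha> s) * pdt u s x - (c1 * x + c2) * pdx u s x) has_real_derivative
     (deriv r t * u t x + (c1/2 + r t) * pdt u t x + (- deriv \<alpha> t) * pdt u t x + (- \<alpha> t) * pdt (pdt u) t x - (c1 * x + c2) * pdt (pdx u) t x)) (at t)"
    by (auto intro!: derivative_eq_intros has_pdt_w smooth1_DERIV_w sa sr su smooth_pdt smooth_pdx)
  show ?thesis
    unfolding eta_t_def charW_eq pdt_def[of "\<lambda>t x. _", abs_def]
    using DERIV_imp_deriv[OF d] schwarz_u[OF su, of t x]
    by (simp add: tau xi pdt_def algebra_simps)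
qed

lemma prY_eq:
  assumes su: "smooth (U2 u)"
  shows "prY_eqn1 tau xi eta w1 w2 w3 w4 w5 w6 A B C E F Q u t x =
    (c1/2 + r t - deriv \<alpha> t) * eqn1 A B C E F Q u t x
    + (w1 t x (u t x) (A t) (B t) (C t) (E t) (F t) (Q t) - (5 * c1 * A t - deriv \<alpha> t * A t)) * pdxn 5 u t x
    + (w2 t x (u t x) (A t) (B t) (C t) (E t) (F t) (Q t) - (3 * c1 * B t - deriv \<alpha> t * B t)) * pdxn 3 u t x
    + (w3 t x (u t x) (A t) (B t) (C t) (E t) (F t) (Q t) - (5 / 2 * c1 * C t - deriv \<alpha> t * C t - r t * C t)) * u t x * pdxn 3 u t x
    + (w4 t x (u t x) (A t) (B t) (C t) (E t) (F t) (Q t) - (c1 / 2 * E t - deriv \<alpha> t * E t - r t * E t)) * u t x * pdx u t x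
    + (w5 t x (u t x) (A t) (B t) (C t) (E t) (F t) (Q t) - (5 / 2 * c1 * F t - deriv \<alpha> t * F t - r t * F t)) * pdx u t x * pdxn 2 u t x
    + (w6 t x (u t x) (A t) (B t) (C t) (E t) (F t) (Q t) - (- deriv \<alpha> t * Q t - deriv r t)) * u t x"
proof -
  have e1: "eta_xn 1 tau xi eta u t x = (c1/2 + r t - c1) * pdx u t x"
    using eta_xn_eq[OF su, of 1] by simp
  have e2: "eta_xn 2 tau xi eta u t x = (c1/2 + r t - 2 * c1) * pdxn 2 u t x"
    using eta_xn_eq[OF su, of 2] by simp
  have e3: "eta_xn 3 tau xi eta u t x = (c1/2 + r t - 3 * c1) * pdxn 3 u t x"
    using eta_xn_eq[OF su, of 3] by simp
  have e5: "eta_xn 5 tau xi eta u t x = (c1/2 + r t - 5 * c1) * pdxn 5 u t x"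
    using eta_xn_eq[OF su, of 5] by simp
  show ?thesis
    unfolding prY_eqn1_def Let_def e1 e2 e3 e5 eta_t_eq[OF su] eqn1_def eta
    by (simp add: algebra_simps)
qed

end

lemma pdxn_deriv: "pdxn n f t x = (deriv ^^ n) (\<lambda>y. f t y) x"
proof (induction n arbitrary: x)
  case 0 thus ?case by simp
next
  case (Suc n)
  have "pdxn (Suc n) f t x = deriv (\<lambda>y. pdxn n f t y) x" by (simp add: pdxn_Suc pdx_def)
  also have "(\<lambda>y. pdxn n f t y) = (deriv ^^ n) (\<lambda>y. f t y)" using Suc by auto
  finally show ?case by simp
qed

lemma smooth_power[intro]: "smooth (f::'a::real_normed_vector \<Rightarrow> real) \<Longrightarrow> smooth (\<lambda>z. f z ^ n)"
  by (induction n) (auto intro!: smooth_mult)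

lemma fd_add:
  fixes f g :: "'a::real_normed_vector \<Rightarrow> real"
  shows "smooth f \<Longrightarrow> smooth g \<Longrightarrow>
   frechet_derivative (\<lambda>w. f w + g w) (at z) v = frechet_derivative f (at z) v + frechet_derivative g (at z) v"
proof -
  assume f: "smooth f" and g: "smooth g"
  have "((\<lambda>w. f w + g w) has_derivative (\<lambda>h. frechet_derivative f (at z) h + frechet_derivative g (at z) h)) (at z)"
    using has_derivative_add[OF smooth_has_fd[OF f] smooth_has_fd[OF g]] .
  thus ?thesis using frechet_derivative_at by metis
qed

lemma fd_mult:
  fixes f g :: "'a::real_normed_vector \<Rightarrow> real"
  shows "smooth f \<Longrightarrow> smooth g \<Longrightarrow>
   frechet_derivative (\<lambda>w. f w * g w) (at z) v = f z * frechet_derivative g (at z) v + frechet_derivative f (at z) v * g z"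
proof -
  assume f: "smooth f" and g: "smooth g"
  have "((\<lambda>w. f w * g w) has_derivative (\<lambda>h. f z * frechet_derivative g (at z) h + frechet_derivative f (at z) h * g z)) (at z)"
    using has_derivative_mult[OF smooth_has_fd[OF f] smooth_has_fd[OF g]] .
  thus ?thesis using frechet_derivative_at by metis
qed

lemma fd_diff:
  fixes f g :: "'a::real_normed_vector \<Rightarrow> real"
  shows "smooth f \<Longrightarrow> smooth g \<Longrightarrow>
   frechet_derivative (\<lambda>w. f w - g w) (at z) v = frechet_derivative f (at z) v - frechet_derivative g (at z) v"
proof -
  assume f: "smooth f" and g: "smooth g"
  have "((\<lambda>w. f w - g w) has_derivative (\<lambda>h. frechet_derivative f (at z) h - frechet_derivative g (at z) h)) (at z)"
    using has_derivative_diff[OF smooth_has_fd[OF f] smooth_has_fd[OF g]] .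
  thus ?thesis using frechet_derivative_at by metis
qed

lemma D1_add[simp]: "smooth f \<Longrightarrow> smooth g \<Longrightarrow> D1 (\<lambda>w. f w + g w) = (\<lambda>w. D1 f w + D1 g w)"
  by (rule ext) (simp add: D1_def fd_add)
lemma D2_add[simp]: "smooth f \<Longrightarrow> smooth g \<Longrightarrow> D2 (\<lambda>w. f w + g w) = (\<lambda>w. D2 f w + D2 g w)"
  by (rule ext) (simp add: D2_def fd_add)
lemma D1_diff[simp]: "smooth f \<Longrightarrow> smooth g \<Longrightarrow> D1 (\<lambda>w. f w - g w) = (\<lambda>w. D1 f w - D1 g w)"
  by (rule ext) (simp add: D1_def fd_diff)
lemma D2_diff[simp]: "smooth f \<Longrightarrow> smooth g \<Longrightarrow> D2 (\<lambda>w. f w - g w) = (\<lambda>w. D2 f w - D2 g w)"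
  by (rule ext) (simp add: D2_def fd_diff)
lemma D1_mult[simp]: "smooth f \<Longrightarrow> smooth g \<Longrightarrow> D1 (\<lambda>w. f w * g w) = (\<lambda>w. f w * D1 g w + D1 f w * g w)"
  by (rule ext) (simp add: D1_def fd_mult)
lemma D2_mult[simp]: "smooth f \<Longrightarrow> smooth g \<Longrightarrow> D2 (\<lambda>w. f w * g w) = (\<lambda>w. f w * D2 g w + D2 f w * g w)"
  by (rule ext) (simp add: D2_def fd_mult)
lemma D1_const[simp]: "D1 (\<lambda>w. c) = (\<lambda>w. 0)" by (simp add: D1_def[abs_def])
lemma D2_const[simp]: "D2 (\<lambda>w. c) = (\<lambda>w. 0)" by (simp add: D2_def[abs_def])

lemma fd_fst_comp:
  assumes h: "smooth (h::real \<Rightarrow> real)"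
  shows "frechet_derivative (\<lambda>w::real\<times>real. h (fst w)) (at z) v = deriv h (fst z) * fst v"
proof -
  have "((\<lambda>w::real\<times>real. h (fst w)) has_derivative (\<lambda>v. deriv h (fst z) * fst v)) (at z)"
  proof -
    have "(h has_derivative (*) (deriv h (fst z))) (at (fst z))"
      using smooth1_DERIV[OF h] by (simp add: has_field_derivative_def)
    from has_derivative_compose[OF has_derivative_fst[OF has_derivative_ident] this]
    show ?thesis by simp
  qed
  thus ?thesis using frechet_derivative_at by metis
qed

lemma D1_fst_comp[simp]: "smooth h \<Longrightarrow> D1 (\<lambda>w. h (fst w)) = (\<lambda>w. deriv h (fst w))"
  by (rule ext) (simp add: D1_def fd_fst_comp)
lemma D2_fst_comp[simp]: "smooth h \<Longrightarrow> D2 (\<lambda>w. h (fst w)) = (\<lambda>w. 0)"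
  by (rule ext) (simp add: D2_def fd_fst_comp)

definition Dop :: "(real \<Rightarrow> real) \<Rightarrow> (real\<times>real \<Rightarrow> real) \<Rightarrow> real\<times>real \<Rightarrow> real" where
  "Dop P1 K = (\<lambda>w. D1 K w + D2 K w * P1 (fst w))"

lemma smooth_Dop[intro]: "smooth P1 \<Longrightarrow> smooth K \<Longrightarrow> smooth (Dop P1 K)"
  unfolding Dop_def by (intro smooth_add smooth_mult smooth_D1 smooth_D2 smooth_comp_fst)

lemma deriv_comp:
  assumes K: "smooth K" and P: "\<And>y. (P has_real_derivative P1 y) (at y)"
  shows "deriv (\<lambda>y. K (y, P y)) = (\<lambda>y. Dop P1 K (y, P y))"
proof
  fix y show "deriv (\<lambda>y. K (y, P y)) y = Dop P1 K (y, P y)"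
    using DERIV_imp_deriv[OF chain2[OF K P]] by (simp add: Dop_def)
qed

lemma derivn_comp:
  assumes K: "smooth K" and P1: "smooth P1" and P: "\<And>y. (P has_real_derivative P1 y) (at y)"
  shows "(deriv ^^ n) (\<lambda>y. K (y, P y)) = (\<lambda>y. (Dop P1 ^^ n) K (y, P y))"
proof (induction n)
  case 0 thus ?case by simp
next
  case (Suc n)
  have s: "smooth ((Dop P1 ^^ n) K)" by (induction n) (auto simp: K P1)
  show ?case using deriv_comp[OF s P] Suc by simp
qed

definition qp :: "real \<Rightarrow> real \<Rightarrow> real \<Rightarrow> real \<Rightarrow> real \<Rightarrow> real \<Rightarrow> real \<Rightarrow> real \<Rightarrow> real" where
  "qp x0 a0 a1 a2 a3 a4 a5 y = a0 + a1 * (y - x0) + a2 * (y - x0)^2 / 2 + a3 * (y - x0)^3 / 6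
     + a4 * (y - x0)^4 / 24 + a5 * (y - x0)^5 / 120"

lemma qp_at[simp]: "qp x0 a0 a1 a2 a3 a4 a5 x0 = a0" by (simp add: qp_def)

lemma qp_DERIV: "(qp x0 a0 a1 a2 a3 a4 a5 has_real_derivative qp x0 a1 a2 a3 a4 a5 0 y) (at y within S)"
  unfolding qp_def[abs_def] qp_def
  by (auto intro!: derivative_eq_intros simp: field_simps power2_eq_square power3_eq_cube
      power4_eq_xxxx power_Suc)

lemma qp_deriv[simp]: "deriv (qp x0 a0 a1 a2 a3 a4 a5) = qp x0 a1 a2 a3 a4 a5 0"
  using qp_DERIV DERIV_imp_deriv by blast

lemma smooth_qp[intro]: "smooth (qp x0 a0 a1 a2 a3 a4 a5)"
proof -
  have "smooth (\<lambda>y. a0 + a1 * (y - x0) + a2 * (y - x0)^2 / 2 + a3 * (y - x0)^3 / 6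
     + a4 * (y - x0)^4 / 24 + a5 * (y - x0)^5 / 120)"
    unfolding divide_inverse by (intro smooth_add smooth_mult smooth_power smooth_diff smooth_const smooth_id)
  thus ?thesis unfolding qp_def[abs_def] .
qed

definition tu :: "real \<Rightarrow> real \<Rightarrow> real \<Rightarrow> real \<Rightarrow> real \<Rightarrow> real \<Rightarrow> real \<Rightarrow> real \<Rightarrow> real \<Rightarrow> real \<Rightarrow> real \<Rightarrow> real" where
  "tu t0 x0 v a0 a1 a2 a3 a4 a5 t y = qp x0 a0 a1 a2 a3 a4 a5 y + v * (t - t0)"

lemma smooth_tu[intro]: "smooth (U2 (tu t0 x0 v a0 a1 a2 a3 a4 a5))"
proof -
  have "smooth (\<lambda>p::real\<times>real. qp x0 a0 a1 a2 a3 a4 a5 (snd p) + v * (fst p - t0))"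
  proof (intro smooth_add smooth_mult smooth_diff smooth_const smooth_fst)
    show "smooth (\<lambda>p::real\<times>real. qp x0 a0 a1 a2 a3 a4 a5 (snd p))"
      using smooth_affine[OF bounded_linear_snd smooth_qp, of x0 a0 a1 a2 a3 a4 a5 0] by simp
  qed
  thus ?thesis by (simp add: U2_def tu_def[abs_def])
qed

lemma tu_pdx[simp]: "pdx (tu t0 x0 v a0 a1 a2 a3 a4 a5) = tu t0 x0 0 a1 a2 a3 a4 a5 0"
proof (rule ext, rule ext)
  fix t x
  have "((\<lambda>y. tu t0 x0 v a0 a1 a2 a3 a4 a5 t y) has_real_derivative qp x0 a1 a2 a3 a4 a5 0 x) (at x)"
    unfolding tu_def by (auto intro!: derivative_eq_intros qp_DERIV)
  thus "pdx (tu t0 x0 v a0 a1 a2 a3 a4 a5) t x = tu t0 x0 0 a1 a2 a3 a4 a5 0 t x"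
    using DERIV_imp_deriv by (fastforce simp: pdx_def tu_def)
qed

lemma tu_pdt[simp]: "pdt (tu t0 x0 v a0 a1 a2 a3 a4 a5) = tu t0 x0 0 v 0 0 0 0 0"
proof (rule ext, rule ext)
  fix t x
  have "((\<lambda>s. tu t0 x0 v a0 a1 a2 a3 a4 a5 s x) has_real_derivative v) (at t)"
    unfolding tu_def by (auto intro!: derivative_eq_intros)
  thus "pdt (tu t0 x0 v a0 a1 a2 a3 a4 a5) t x = tu t0 x0 0 v 0 0 0 0 0 t x"
    using DERIV_imp_deriv by (fastforce simp: pdt_def tu_def qp_def)
qed

lemma tu_at[simp]: "tu t0 x0 v a0 a1 a2 a3 a4 a5 t0 x0 = a0" by (simp add: tu_def)
lemma tu_t0: "tu t0 x0 v a0 a1 a2 a3 a4 a5 t0 = qp x0 a0 a1 a2 a3 a4 a5" by (auto simp: tu_def)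

lemma tu_pdxn:
  "pdxn 2 (tu t0 x0 v a0 a1 a2 a3 a4 a5) = tu t0 x0 0 a2 a3 a4 a5 0 0"
  "pdxn 3 (tu t0 x0 v a0 a1 a2 a3 a4 a5) = tu t0 x0 0 a3 a4 a5 0 0 0"
  "pdxn 4 (tu t0 x0 v a0 a1 a2 a3 a4 a5) = tu t0 x0 0 a4 a5 0 0 0 0"
  "pdxn 5 (tu t0 x0 v a0 a1 a2 a3 a4 a5) = tu t0 x0 0 a5 0 0 0 0 0"
  "pdxn 6 (tu t0 x0 v a0 a1 a2 a3 a4 a5) = tu t0 x0 0 0 0 0 0 0 0"
  by (simp_all add: numeral_eq_Suc pdxn_Suc)

lemma tu_pdxn_gen: "pdxn (Suc n) (tu t0 x0 0 v 0 0 0 0 0) = tu t0 x0 0 0 0 0 0 0 0"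
  by (induction n) (simp_all add: pdxn_Suc)


abbreviation sm3 :: "(real \<Rightarrow> real \<Rightarrow> real \<Rightarrow> real) \<Rightarrow> bool" where
  "sm3 F \<equiv> smooth (\<lambda>(t::real, x::real, u::real). F t x u)"

lemma sl_y3: assumes "sm3 F" shows "smooth (\<lambda>y. F t y u)"
proof -
  have "bounded_linear (\<lambda>y::real. (0::real, y, 0::real))"
    by (intro bounded_linear_Pair bounded_linear_zero bounded_linear_ident)
  from smooth_affine[OF this assms, of "(t, 0, u)"] show ?thesis by simp
qed
lemma sl_z3: assumes "sm3 F" shows "smooth (\<lambda>z. F t x z)"
proof -
  have "bounded_linear (\<lambda>y::real. (0::real, 0::real, y))"
    by (intro bounded_linear_Pair bounded_linear_zero bounded_linear_ident)
  from smooth_affine[OF this assms, of "(t, x, 0)"] show ?thesis by simp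
qed
lemma sl_s3: assumes "sm3 F" shows "smooth (\<lambda>s. F s x u)"
proof -
  have "bounded_linear (\<lambda>y::real. (y, 0::real, 0::real))"
    by (intro bounded_linear_Pair bounded_linear_zero bounded_linear_ident)
  from smooth_affine[OF this assms, of "(0, x, u)"] show ?thesis by simp
qed
lemma sl_G: assumes "sm3 F" shows "smooth (\<lambda>w::real\<times>real. F t (fst w) (snd w))"
proof -
  have "bounded_linear (\<lambda>w::real\<times>real. (0::real, fst w, snd w))"
    by (intro bounded_linear_Pair bounded_linear_zero bounded_linear_fst bounded_linear_snd)
  from smooth_affine[OF this assms, of "(t, 0, 0)"] show ?thesis by (simp add: case_prod_beta)
qed
lemma sl_H: assumes "sm3 F" shows "smooth (\<lambda>w::real\<times>real. F (fst w) x (snd w))"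
proof -
  have "bounded_linear (\<lambda>w::real\<times>real. (fst w, 0::real, snd w))"
    by (intro bounded_linear_Pair bounded_linear_zero bounded_linear_fst bounded_linear_snd)
  from smooth_affine[OF this assms, of "(0, x, 0)"] show ?thesis by (simp add: case_prod_beta)
qed

abbreviation sm9 :: "(real \<Rightarrow> real \<Rightarrow> real \<Rightarrow> real \<Rightarrow> real \<Rightarrow> real \<Rightarrow> real \<Rightarrow> real \<Rightarrow> real \<Rightarrow> real) \<Rightarrow> bool" where
  "sm9 w \<equiv> smooth (\<lambda>(t::real, x::real, u::real, a::real, b::real, c::real, e::real, f::real, q::real). w t x u a b c e f q)"

lemma sl9_y: assumes "sm9 w" shows "smooth (\<lambda>y. w t y u a b c e f q)"
proof -
  have "bounded_linear (\<lambda>y::real. (0::real, y, 0::real, 0::real, 0::real, 0::real, 0::real, 0::real, 0::real))"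
    by (intro bounded_linear_Pair bounded_linear_zero bounded_linear_ident)
  from smooth_affine[OF this assms, of "(t, 0, u, a, b, c, e, f, q)"] show ?thesis by simp
qed
lemma sl9_z: assumes "sm9 w" shows "smooth (\<lambda>z. w t x z a b c e f q)"
proof -
  have "bounded_linear (\<lambda>y::real. (0::real, 0::real, y, 0::real, 0::real, 0::real, 0::real, 0::real, 0::real))"
    by (intro bounded_linear_Pair bounded_linear_zero bounded_linear_ident)
  from smooth_affine[OF this assms, of "(t, x, 0, a, b, c, e, f, q)"] show ?thesis by simp
qed
lemma sl9_a: assumes "sm9 w" shows "smooth (\<lambda>y. w t x u y b c e f q)"
proof -
  have "bounded_linear (\<lambda>y::real. (0::real, 0::real, 0::real, y, 0::real, 0::real, 0::real, 0::real, 0::real))"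
    by (intro bounded_linear_Pair bounded_linear_zero bounded_linear_ident)
  from smooth_affine[OF this assms, of "(t, x, u, 0, b, c, e, f, q)"] show ?thesis by simp
qed
lemma sl9_c: assumes "sm9 w" shows "smooth (\<lambda>y. w t x u a b y e f q)"
proof -
  have "bounded_linear (\<lambda>y::real. (0::real, 0::real, 0::real, 0::real, 0::real, y, 0::real, 0::real, 0::real))"
    by (intro bounded_linear_Pair bounded_linear_zero bounded_linear_ident)
  from smooth_affine[OF this assms, of "(t, x, u, a, b, 0, e, f, q)"] show ?thesis by simp
qed

lemma ext0:
  fixes f g :: "real \<Rightarrow> real"
  assumes f: "continuous_on UNIV f" and g: "continuous_on UNIV g" and eq: "\<And>x. x \<noteq> 0 \<Longrightarrow> f x = g x"
  shows "f y = g y"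
proof (cases "y = 0")
  case False thus ?thesis using eq by simp
next
  case True
  have "(f \<longlongrightarrow> f 0) (at 0)" using f continuous_on_eq_continuous_at[of UNIV f]
    by (simp add: isCont_def)
  moreover have "(g \<longlongrightarrow> g 0) (at 0)" using g continuous_on_eq_continuous_at[of UNIV g]
    by (simp add: isCont_def)
  moreover have "eventually (\<lambda>x. f x = g x) (at 0)"
    using eq by (auto simp: eventually_at_filter)
  ultimately have "(g \<longlongrightarrow> f 0) (at 0)" using Lim_transform_eventually by fastforce
  hence "f 0 = g 0" using \<open>(g \<longlongrightarrow> g 0) (at 0)\<close> tendsto_unique[of "at (0::real)"] by auto
  thus ?thesis using True by simp
qed

lemma const_of_deriv0:
  assumes "smooth (f::real\<Rightarrow>real)" and "\<And>y. deriv f y = 0"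
  shows "f x = f y"
  using DERIV_isconst_all[of f x y] smooth1_DERIV[OF assms(1)] assms(2) by metis

lemma affine_of_deriv_const:
  assumes s: "smooth (f::real\<Rightarrow>real)" and d: "\<And>y. deriv f y = k"
  shows "f x = f 0 + k * x"
proof -
  have "\<forall>y. DERIV (\<lambda>y. f y - k * y) y :> 0"
    using smooth1_DERIV[OF s] d by (auto intro!: derivative_eq_intros)
  from DERIV_isconst_all[OF this, of x 0] show ?thesis by simp
qed

lemma affine_of_deriv2:
  assumes s: "smooth (f::real\<Rightarrow>real)" and d: "\<And>y. deriv (deriv f) y = 0"
  shows "f x = f 0 + x * (f 1 - f 0)"
proof -
  have "deriv f y = deriv f 0" for y
    using const_of_deriv0[OF smooth1_deriv[OF s] d] .
  hence "f z = f 0 + deriv f 0 * z" for z using affine_of_deriv_const[OF s] by blast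
  from this[of 1] this[of x] show ?thesis by (simp add: algebra_simps)
qed

lemma deriv_minus_const: "deriv (\<lambda>y. f y - c) = deriv (f::real\<Rightarrow>real)"
proof (rule ext)
  fix y
  have "((\<lambda>y. f y - c) has_field_derivative D) (at y) \<longleftrightarrow> (f has_field_derivative D) (at y)" for D
  proof
    assume "((\<lambda>y. f y - c) has_field_derivative D) (at y)"
    from DERIV_add[OF this DERIV_const[of c]] show "(f has_field_derivative D) (at y)" by simp
  next
    assume "(f has_field_derivative D) (at y)"
    from DERIV_diff[OF this DERIV_const[of c]] show "((\<lambda>y. f y - c) has_field_derivative D) (at y)" by simp
  qed
  thus "deriv (\<lambda>y. f y - c) y = deriv f y" by (simp add: deriv_def)
qed

lemma derivn_minus_const: "n \<ge> 1 \<Longrightarrow> (deriv ^^ n) (\<lambda>y. f y - c) = (deriv ^^ n) (f::real\<Rightarrow>real)"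
  by (cases n) (simp_all add: funpow_Suc_right deriv_minus_const del: funpow.simps)


lemma qp_const[simp]: "qp x0 v 0 0 0 0 0 y = v" by (simp add: qp_def)

lemma eqn1_tu: "eqn1 A B C E F Q (tu t0 x0 v a0 a1 a2 a3 a4 a5) t0 x0 =
   v + A t0 * a5 + B t0 * a3 + C t0 * a0 * a3 + E t0 * a0 * a1 + F t0 * a1 * a2 + Q t0 * a0"
  by (simp add: eqn1_def tu_pdxn tu_def)

locale tl =
  fixes tau xi eta :: "real \<Rightarrow> real \<Rightarrow> real \<Rightarrow> real" and \<alpha> :: "real \<Rightarrow> real"
  assumes s\<eta>: "sm3 eta" and s\<xi>: "sm3 xi" and s\<alpha>: "smooth \<alpha>" and tau_eq: "\<And>t x u. tau t x u = \<alpha> t"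
begin

definition XX :: "real \<Rightarrow> real \<Rightarrow> real \<Rightarrow> real \<Rightarrow> real \<Rightarrow> real \<Rightarrow> real \<Rightarrow> real \<Rightarrow> nat \<Rightarrow> real" where
  "XX t0 x0 a0 a1 a2 a3 a4 a5 n = (Dop (qp x0 a1 a2 a3 a4 a5 0) ^^ n)
     (\<lambda>w. eta t0 (fst w) (snd w) - xi t0 (fst w) (snd w) * qp x0 a1 a2 a3 a4 a5 0 (fst w)) (x0, a0)"

lemma eta_xn_test:
  assumes n: "n \<ge> 1"
  shows "eta_xn n tau xi eta (tu t0 x0 v a0 a1 a2 a3 a4 a5) t0 x0 =
    XX t0 x0 a0 a1 a2 a3 a4 a5 n + xi t0 x0 a0 * pdxn (Suc n) (tu t0 x0 v a0 a1 a2 a3 a4 a5) t0 x0"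
proof -
  let ?u = "tu t0 x0 v a0 a1 a2 a3 a4 a5"
  let ?P = "qp x0 a0 a1 a2 a3 a4 a5" and ?P1 = "qp x0 a1 a2 a3 a4 a5 0"
  define K where "K = (\<lambda>w. eta t0 (fst w) (snd w) - xi t0 (fst w) (snd w) * ?P1 (fst w))"
  have sK: "smooth K" unfolding K_def
    by (intro smooth_diff smooth_mult sl_G[OF s\<eta>] sl_G[OF s\<xi>] smooth_comp_fst smooth_qp)
  have cw: "(\<lambda>y. charW tau xi eta ?u t0 y) = (\<lambda>y. K (y, ?P y) - \<alpha> t0 * v)"
    by (rule ext) (simp add: charW_def tau_eq K_def tu_def algebra_simps)
  have "pdxn n (charW tau xi eta ?u) t0 x0 = (deriv ^^ n) (\<lambda>y. K (y, ?P y) - \<alpha> t0 * v) x0"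
    by (simp add: pdxn_deriv cw)
  also have "\<dots> = (deriv ^^ n) (\<lambda>y. K (y, ?P y)) x0" using derivn_minus_const[OF n] by simp
  also have "\<dots> = XX t0 x0 a0 a1 a2 a3 a4 a5 n"
    using derivn_comp[OF sK smooth_qp, of ?P, OF qp_DERIV] by (simp add: XX_def K_def)
  finally have 1: "pdxn n (charW tau xi eta ?u) t0 x0 = XX t0 x0 a0 a1 a2 a3 a4 a5 n" .
  obtain m where m: "n = Suc m" using n by (cases n) auto
  have 2: "pdxn n (pdt ?u) t0 x0 = 0" by (simp add: m tu_pdxn_gen tu_def qp_def)
  show ?thesis unfolding eta_xn_def 1 2 by simp
qed

lemma eta_t_test:
  "eta_t tau xi eta (tu t0 x0 v a0 a1 a2 a3 a4 a5) t0 x0 =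
     D1 (\<lambda>w. eta (fst w) x0 (snd w)) (t0, a0) + D2 (\<lambda>w. eta (fst w) x0 (snd w)) (t0, a0) * v
     - deriv \<alpha> t0 * v
     - (D1 (\<lambda>w. xi (fst w) x0 (snd w)) (t0, a0) + D2 (\<lambda>w. xi (fst w) x0 (snd w)) (t0, a0) * v) * a1"
proof -
  let ?u = "tu t0 x0 v a0 a1 a2 a3 a4 a5"
  have P: "((\<lambda>s. a0 + v * (s - t0)) has_real_derivative v) (at s)" for s
    by (auto intro!: derivative_eq_intros)
  have hE: "((\<lambda>s. eta s x0 (a0 + v * (s - t0))) has_real_derivative
      D1 (\<lambda>w. eta (fst w) x0 (snd w)) (t0, a0) + D2 (\<lambda>w. eta (fst w) x0 (snd w)) (t0, a0) * v) (at t0)"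
    using chain2[OF sl_H[OF s\<eta>, where x=x0] P, where y=t0] by simp
  have hX: "((\<lambda>s. xi s x0 (a0 + v * (s - t0))) has_real_derivative
      D1 (\<lambda>w. xi (fst w) x0 (snd w)) (t0, a0) + D2 (\<lambda>w. xi (fst w) x0 (snd w)) (t0, a0) * v) (at t0)"
    using chain2[OF sl_H[OF s\<xi>, where x=x0] P, where y=t0] by simp
  have d: "((\<lambda>s. eta s x0 (a0 + v * (s - t0)) - \<alpha> s * v - xi s x0 (a0 + v * (s - t0)) * a1) has_real_derivative
     (D1 (\<lambda>w. eta (fst w) x0 (snd w)) (t0, a0) + D2 (\<lambda>w. eta (fst w) x0 (snd w)) (t0, a0) * v
     - deriv \<alpha> t0 * v
     - (D1 (\<lambda>w. xi (fst w) x0 (snd w)) (t0, a0) + D2 (\<lambda>w. xi (fst w) x0 (snd w)) (t0, a0) * v) * a1)) (at t0)"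
    by (intro DERIV_diff hE DERIV_cmult_right hX smooth1_DERIV s\<alpha>)
  have cw: "(\<lambda>s. charW tau xi eta ?u s x0) = (\<lambda>s. eta s x0 (a0 + v * (s - t0)) - \<alpha> s * v - xi s x0 (a0 + v * (s - t0)) * a1)"
    by (rule ext) (simp add: charW_def tau_eq tu_def)
  have 1: "pdt (charW tau xi eta ?u) t0 x0 = D1 (\<lambda>w. eta (fst w) x0 (snd w)) (t0, a0) + D2 (\<lambda>w. eta (fst w) x0 (snd w)) (t0, a0) * v
     - deriv \<alpha> t0 * v
     - (D1 (\<lambda>w. xi (fst w) x0 (snd w)) (t0, a0) + D2 (\<lambda>w. xi (fst w) x0 (snd w)) (t0, a0) * v) * a1"
    unfolding pdt_def cw using DERIV_imp_deriv[OF d] .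
  show ?thesis unfolding eta_t_def 1 by (simp add: tu_def)
qed

lemma prY_tu:
  "prY_eqn1 tau xi eta w1 w2 w3 w4 w5 w6 A B C E F Q (tu t0 x0 v a0 a1 a2 a3 a4 a5) t0 x0 =
    (D1 (\<lambda>w. eta (fst w) x0 (snd w)) (t0, a0) + D2 (\<lambda>w. eta (fst w) x0 (snd w)) (t0, a0) * v
     - deriv \<alpha> t0 * v
     - (D1 (\<lambda>w. xi (fst w) x0 (snd w)) (t0, a0) + D2 (\<lambda>w. xi (fst w) x0 (snd w)) (t0, a0) * v) * a1)
    + w1 t0 x0 a0 (A t0) (B t0) (C t0) (E t0) (F t0) (Q t0) * a5
    + A t0 * XX t0 x0 a0 a1 a2 a3 a4 a5 5
    + w2 t0 x0 a0 (A t0) (B t0) (C t0) (E t0) (F t0) (Q t0) * a3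
    + B t0 * (XX t0 x0 a0 a1 a2 a3 a4 a5 3 + xi t0 x0 a0 * a4)
    + w3 t0 x0 a0 (A t0) (B t0) (C t0) (E t0) (F t0) (Q t0) * a0 * a3
    + C t0 * eta t0 x0 a0 * a3
    + C t0 * a0 * (XX t0 x0 a0 a1 a2 a3 a4 a5 3 + xi t0 x0 a0 * a4)
    + w4 t0 x0 a0 (A t0) (B t0) (C t0) (E t0) (F t0) (Q t0) * a0 * a1
    + E t0 * eta t0 x0 a0 * a1
    + E t0 * a0 * (XX t0 x0 a0 a1 a2 a3 a4 a5 1 + xi t0 x0 a0 * a2)
    + w5 t0 x0 a0 (A t0) (B t0) (C t0) (E t0) (F t0) (Q t0) * a1 * a2
    + F t0 * (XX t0 x0 a0 a1 a2 a3 a4 a5 1 + xi t0 x0 a0 * a2) * a2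
    + F t0 * a1 * (XX t0 x0 a0 a1 a2 a3 a4 a5 2 + xi t0 x0 a0 * a3)
    + w6 t0 x0 a0 (A t0) (B t0) (C t0) (E t0) (F t0) (Q t0) * a0
    + Q t0 * eta t0 x0 a0"
proof -
  have x1: "eta_xn 1 tau xi eta (tu t0 x0 v a0 a1 a2 a3 a4 a5) t0 x0 = XX t0 x0 a0 a1 a2 a3 a4 a5 1 + xi t0 x0 a0 * a2"
    using eta_xn_test[of 1] by (simp add: tu_pdxn tu_def pdxn_Suc numeral_eq_Suc)
  have x2: "eta_xn 2 tau xi eta (tu t0 x0 v a0 a1 a2 a3 a4 a5) t0 x0 = XX t0 x0 a0 a1 a2 a3 a4 a5 2 + xi t0 x0 a0 * a3"
    using eta_xn_test[of 2] by (simp add: tu_pdxn tu_def pdxn_Suc numeral_eq_Suc)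
  have x3: "eta_xn 3 tau xi eta (tu t0 x0 v a0 a1 a2 a3 a4 a5) t0 x0 = XX t0 x0 a0 a1 a2 a3 a4 a5 3 + xi t0 x0 a0 * a4"
    using eta_xn_test[of 3] by (simp add: tu_pdxn tu_def pdxn_Suc numeral_eq_Suc)
  have x5: "eta_xn 5 tau xi eta (tu t0 x0 v a0 a1 a2 a3 a4 a5) t0 x0 = XX t0 x0 a0 a1 a2 a3 a4 a5 5"
    using eta_xn_test[of 5] by (simp add: tu_pdxn tu_def pdxn_Suc numeral_eq_Suc)
  show ?thesis unfolding prY_eqn1_def Let_def x1 x2 x3 x5 eta_t_test
    by (simp add: tu_pdxn tu_def)
qed

end

lemma deriv_lin: "deriv (\<lambda>s. a + (s - t)) x = (1::real)"
  by (rule DERIV_imp_deriv) (auto intro!: derivative_eq_intros)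

lemma smooth_lin: "smooth (\<lambda>s::real. a + (s - t))"
  by (intro smooth_add smooth_diff smooth_const smooth_id)

locale dir =
  fixes tau xi eta :: "real \<Rightarrow> real \<Rightarrow> real \<Rightarrow> real"
    and w1 w2 w3 w4 w5 w6 :: "real \<Rightarrow> real \<Rightarrow> real \<Rightarrow> real \<Rightarrow> real \<Rightarrow> real \<Rightarrow> real \<Rightarrow> real \<Rightarrow> real \<Rightarrow> real"
  assumes s\<tau>: "sm3 tau" and s\<xi>: "sm3 xi" and s\<eta>: "sm3 eta"
    and sw1: "sm9 w1" and sw2: "sm9 w2" and sw3: "sm9 w3" and sw4: "sm9 w4" and sw5: "sm9 w5" and sw6: "sm9 w6"
    and H: "inf_equiv_transf tau xi eta w1 w2 w3 w4 w5 w6"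
begin

lemma HA:
  assumes "smooth A" "smooth B" "smooth C" "smooth E" "smooth F" "smooth Q"
    and "smooth (U2 u)" "A t \<noteq> 0" "C t \<noteq> 0" "eqn1 A B C E F Q u t x = 0"
  shows "prY_eqn1 tau xi eta w1 w2 w3 w4 w5 w6 A B C E F Q u t x = 0"
proof -
  have h: "smooth A \<and> smooth B \<and> smooth C \<and> smooth E \<and> smooth F \<and> smooth Q \<longrightarrow>
      (\<forall>u t x. smooth (\<lambda>(p::real\<times>real). u (fst p) (snd p)) \<and> A t \<noteq> 0 \<and> C t \<noteq> 0 \<and>
               eqn1 A B C E F Q u t x = 0 \<longrightarrow>
               prY_eqn1 tau xi eta w1 w2 w3 w4 w5 w6 A B C E F Q u t x = 0) \<and>
      (\<forall>t x u. A t \<noteq> 0 \<and> C t \<noteq> 0 \<longrightarrow>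
         (\<forall>(w, theta) \<in> {(w1, A), (w2, B), (w3, C), (w4, E), (w5, F), (w6, Q)}.
            om_x tau w theta A B C E F Q t x u = 0 \<and> om_u tau w theta A B C E F Q t x u = 0))"
    using spec[OF spec[OF spec[OF spec[OF spec[OF spec[OF H[unfolded inf_equiv_transf_def], of A], of B], of C], of E], of F], of Q] .
  hence "\<forall>u t x. smooth (\<lambda>(p::real\<times>real). u (fst p) (snd p)) \<and> A t \<noteq> 0 \<and> C t \<noteq> 0 \<and>
               eqn1 A B C E F Q u t x = 0 \<longrightarrow>
               prY_eqn1 tau xi eta w1 w2 w3 w4 w5 w6 A B C E F Q u t x = 0"
    using assms(1-6) by simp
  hence "smooth (\<lambda>(p::real\<times>real). u (fst p) (snd p)) \<and> A t \<noteq> 0 \<and> C t \<noteq> 0 \<and>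
               eqn1 A B C E F Q u t x = 0 \<longrightarrow>
               prY_eqn1 tau xi eta w1 w2 w3 w4 w5 w6 A B C E F Q u t x = 0" by blast
  thus ?thesis using assms(7-10) by (simp add: U2_def)
qed

lemma HO:
  assumes "smooth A" "smooth B" "smooth C" "smooth E" "smooth F" "smooth Q"
    and "A t \<noteq> 0" "C t \<noteq> 0"
    and "(w, theta) \<in> {(w1, A), (w2, B), (w3, C), (w4, E), (w5, F), (w6, Q)}"
  shows "om_x tau w theta A B C E F Q t x u = 0 \<and> om_u tau w theta A B C E F Q t x u = 0"
proof -
  have "\<forall>(w, theta) \<in> {(w1, A), (w2, B), (w3, C), (w4, E), (w5, F), (w6, Q)}.
            om_x tau w theta A B C E F Q t x u = 0 \<and> om_u tau w theta A B C E F Q t x u = 0"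
  proof -
    have h: "smooth A \<and> smooth B \<and> smooth C \<and> smooth E \<and> smooth F \<and> smooth Q \<longrightarrow>
      (\<forall>u t x. smooth (\<lambda>(p::real\<times>real). u (fst p) (snd p)) \<and> A t \<noteq> 0 \<and> C t \<noteq> 0 \<and>
               eqn1 A B C E F Q u t x = 0 \<longrightarrow>
               prY_eqn1 tau xi eta w1 w2 w3 w4 w5 w6 A B C E F Q u t x = 0) \<and>
      (\<forall>t x u. A t \<noteq> 0 \<and> C t \<noteq> 0 \<longrightarrow>
         (\<forall>(w, theta) \<in> {(w1, A), (w2, B), (w3, C), (w4, E), (w5, F), (w6, Q)}.
            om_x tau w theta A B C E F Q t x u = 0 \<and> om_u tau w theta A B C E F Q t x u = 0))"
      using spec[OF spec[OF spec[OF spec[OF spec[OF spec[OF H[unfolded inf_equiv_transf_def], of A], of B], of C], of E], of F], of Q] .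
    hence "\<forall>t x u. A t \<noteq> 0 \<and> C t \<noteq> 0 \<longrightarrow>
         (\<forall>(w, theta) \<in> {(w1, A), (w2, B), (w3, C), (w4, E), (w5, F), (w6, Q)}.
            om_x tau w theta A B C E F Q t x u = 0 \<and> om_u tau w theta A B C E F Q t x u = 0)"
      using assms(1-6) by simp
    hence "A t \<noteq> 0 \<and> C t \<noteq> 0 \<longrightarrow>
         (\<forall>(w, theta) \<in> {(w1, A), (w2, B), (w3, C), (w4, E), (w5, F), (w6, Q)}.
            om_x tau w theta A B C E F Q t x u = 0 \<and> om_u tau w theta A B C E F Q t x u = 0)"
      by blast
    thus ?thesis using assms(7,8) by blast
  qed
  thus ?thesis using assms(9) by blast
qed

lemma om_const:
  assumes a: "a \<noteq> 0" and c: "c \<noteq> 0"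
  and w: "w \<in> {w1, w2, w3, w4, w5, w6}"
  shows "deriv (\<lambda>y. w t y u a b c e f q) x = 0 \<and> deriv (\<lambda>z. w t x z a b c e f q) u = 0"
proof -
  have s: "smooth (\<lambda>s. k::real)" for k by simp
  from w obtain th :: "real \<Rightarrow> real" where th: "(w, th) \<in> {(w1, \<lambda>s. a), (w2, \<lambda>s. b), (w3, \<lambda>s. c), (w4, \<lambda>s. e), (w5, \<lambda>s. f), (w6, \<lambda>s. q)}"
    and thc: "\<exists>k. th = (\<lambda>s. k)" by blast
  have "om_x tau w th (\<lambda>s. a) (\<lambda>s. b) (\<lambda>s. c) (\<lambda>s. e) (\<lambda>s. f) (\<lambda>s. q) t x u = 0 \<and>
        om_u tau w th (\<lambda>s. a) (\<lambda>s. b) (\<lambda>s. c) (\<lambda>s. e) (\<lambda>s. f) (\<lambda>s. q) t x u = 0"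
    by (rule HO) (use a c th in auto)
  with thc show ?thesis
    by (auto simp: om_x_def om_u_def)
qed

lemma tau_y: "deriv (\<lambda>y. tau t y u) x = 0 \<and> deriv (\<lambda>z. tau t x z) u = 0"
proof -
  have s: "smooth (\<lambda>s. k::real)" for k by simp
  have A: "smooth (\<lambda>s. 1 + (s - t))" by (rule smooth_lin)
  have mem: "(w1, \<lambda>s. 1 + (s - t)) \<in> {(w1, \<lambda>s. 1 + (s - t)), (w2, \<lambda>s. 0), (w3, \<lambda>s. 1), (w4, \<lambda>s. 0), (w5, \<lambda>s. 0), (w6, \<lambda>s. 0)}"
    by (rule insertI1)
  have "om_x tau w1 (\<lambda>s. 1 + (s - t)) (\<lambda>s. 1 + (s - t)) (\<lambda>s. 0) (\<lambda>s. 1) (\<lambda>s. 0) (\<lambda>s. 0) (\<lambda>s. 0) t x u = 0 \<and>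
        om_u tau w1 (\<lambda>s. 1 + (s - t)) (\<lambda>s. 1 + (s - t)) (\<lambda>s. 0) (\<lambda>s. 1) (\<lambda>s. 0) (\<lambda>s. 0) (\<lambda>s. 0) t x u = 0"
    by (rule HO[OF A _ _ _ _ _ _ _ mem]) simp_all
  moreover have "deriv (\<lambda>y. w1 t y u 1 0 1 0 0 0) x = 0 \<and> deriv (\<lambda>z. w1 t x z 1 0 1 0 0 0) u = 0"
    using om_const[where a=1 and c=1 and w=w1 and t=t and u=u and b=0 and e=0 and f=0 and q=0 and x=x, OF one_neq_zero one_neq_zero insertI1] .
  ultimately show ?thesis by (simp add: om_x_def om_u_def deriv_lin)
qed

definition \<alpha> :: "real \<Rightarrow> real" where "\<alpha> t = tau t 0 0"

lemma tau_eq: "tau t x u = \<alpha> t"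
proof -
  have "tau t x u = tau t 0 u"
    using const_of_deriv0[OF sl_y3[OF s\<tau>], of t u x 0] tau_y by blast
  also have "\<dots> = tau t 0 0"
    using const_of_deriv0[OF sl_z3[OF s\<tau>], of t 0 u 0] tau_y by blast
  finally show ?thesis by (simp add: \<alpha>_def)
qed

lemma s\<alpha>: "smooth \<alpha>"
  using sl_s3[OF s\<tau>, of 0 0] by (simp add: \<alpha>_def[abs_def])

lemma w_indep:
  assumes a: "a \<noteq> 0" and c: "c \<noteq> 0" and w: "w \<in> {w1, w2, w3, w4, w5, w6}"
  shows "w t x u a b c e f q = w t 0 0 a b c e f q"
proof -
  have sw: "sm9 w" using w sw1 sw2 sw3 sw4 sw5 sw6 by blast
  have "w t x u a b c e f q = w t 0 u a b c e f q"
    using const_of_deriv0[OF sl9_y[OF sw], of t u a b c e f q x 0] om_const[OF a c w] by blast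
  also have "\<dots> = w t 0 0 a b c e f q"
    using const_of_deriv0[OF sl9_z[OF sw], of t 0 a b c e f q u 0] om_const[OF a c w] by blast
  finally show ?thesis .
qed

sublocale tl tau xi eta \<alpha>
  by unfold_locales (auto simp: s\<eta> s\<xi> s\<alpha> tau_eq)

end

context dir begin

lemmas Dsimps = XX_def Dop_def numeral_eq_Suc sl_G[OF s\<eta>] sl_G[OF s\<xi>] smooth_qp smooth_add smooth_mult
   smooth_diff smooth_comp_fst smooth_D1 smooth_D2

lemma XX3_comb:
  "XX t0 x0 U 1 0 1 0 0 3 - XX t0 x0 U 1 0 0 0 0 3 - XX t0 x0 U 0 0 1 0 0 3 + XX t0 x0 U 0 0 0 0 0 3
   = -4 * D2 (\<lambda>w. xi t0 (fst w) (snd w)) (x0, U)"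
  by (simp add: Dsimps algebra_simps)

lemma T2_eq:
  "prY_eqn1 tau xi eta w1 w2 w3 w4 w5 w6 (\<lambda>_. 1) (\<lambda>_. b) (\<lambda>_. 1) (\<lambda>_. 0) (\<lambda>_. 0) (\<lambda>_. 0)
     (tu t0 x0 (-(b * s + U * s)) U p 0 s 0 0) t0 x0 = 0"
  by (rule HA) (auto simp: eqn1_tu smooth_tu)

lemma T2_diff:
  "- s * D2 (\<lambda>w. eta (fst w) x0 (snd w)) (t0, U) + s * deriv \<alpha> t0
   + s * p * D2 (\<lambda>w. xi (fst w) x0 (snd w)) (t0, U)
   + (w2 t0 x0 U 1 1 1 0 0 0 - w2 t0 x0 U 1 0 1 0 0 0) * s + XX t0 x0 U p 0 s 0 0 3
   + (w3 t0 x0 U 1 1 1 0 0 0 - w3 t0 x0 U 1 0 1 0 0 0) * U * s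
   + (w4 t0 x0 U 1 1 1 0 0 0 - w4 t0 x0 U 1 0 1 0 0 0) * U * p
   + (w6 t0 x0 U 1 1 1 0 0 0 - w6 t0 x0 U 1 0 1 0 0 0) * U = 0"
proof -
  have e1: "prY_eqn1 tau xi eta w1 w2 w3 w4 w5 w6 (\<lambda>_. 1) (\<lambda>_. 1) (\<lambda>_. 1) (\<lambda>_. 0) (\<lambda>_. 0) (\<lambda>_. 0)
     (tu t0 x0 (-(1 * s + U * s)) U p 0 s 0 0) t0 x0 = 0" by (rule T2_eq)
  have e0: "prY_eqn1 tau xi eta w1 w2 w3 w4 w5 w6 (\<lambda>_. 1) (\<lambda>_. 0) (\<lambda>_. 1) (\<lambda>_. 0) (\<lambda>_. 0) (\<lambda>_. 0)
     (tu t0 x0 (-(0 * s + U * s)) U p 0 s 0 0) t0 x0 = 0" by (rule T2_eq)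
  show ?thesis using e1 e0 unfolding prY_tu by (simp add: algebra_simps)
qed

lemma xi_u0: "deriv (\<lambda>z. xi t0 x0 z) U = 0"
proof -
  have a: "D2 (\<lambda>w. xi (fst w) x0 (snd w)) (t0, U) = deriv (\<lambda>z. xi t0 x0 z) U"
    using D2_deriv[OF sl_H[OF s\<xi>, where x=x0], of t0 U] by simp
  have b: "D2 (\<lambda>w. xi t0 (fst w) (snd w)) (x0, U) = deriv (\<lambda>z. xi t0 x0 z) U"
    using D2_deriv[OF sl_G[OF s\<xi>, where t=t0], of x0 U] by simp
  have "D2 (\<lambda>w. xi (fst w) x0 (snd w)) (t0, U) - 4 * D2 (\<lambda>w. xi t0 (fst w) (snd w)) (x0, U) = 0"
    using T2_diff[of 1 x0 t0 U 1] T2_diff[of 0 x0 t0 U 1] T2_diff[of 1 x0 t0 U 0] T2_diff[of 0 x0 t0 U 0]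
      XX3_comb[of t0 x0 U] by (simp add: algebra_simps)
  thus ?thesis using a b by simp
qed

end

context dir begin

lemma xi_indep: "xi t x u = xi t x 0"
  using const_of_deriv0[OF sl_z3[OF s\<xi>], of t x u 0] xi_u0 by blast

lemma D1_xi0[simp]: "D1 (\<lambda>w. xi t0 (fst w) 0) = (\<lambda>w. deriv (\<lambda>y. xi t0 y 0) (fst w))"
  using D1_fst_comp[OF sl_y3[OF s\<xi>, where t=t0 and u=0]] by simp
lemma D2_xi0[simp]: "D2 (\<lambda>w. xi t0 (fst w) 0) = (\<lambda>w. 0)"
  using D2_fst_comp[OF sl_y3[OF s\<xi>, where t=t0 and u=0]] by simp
lemma sm_xi0[simp]: "smooth (\<lambda>w::real\<times>real. xi t0 (fst w) 0)"
  using smooth_comp_fst[OF sl_y3[OF s\<xi>, where t=t0 and u=0]] by simp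

lemma XX_xi0: "XX t0 x0 a0 a1 a2 a3 a4 a5 n = (Dop (qp x0 a1 a2 a3 a4 a5 0) ^^ n)
     (\<lambda>w. eta t0 (fst w) (snd w) - xi t0 (fst w) 0 * qp x0 a1 a2 a3 a4 a5 0 (fst w)) (x0, a0)"
  unfolding XX_def by (subst xi_indep) (rule refl)

lemma F_eq:
  "prY_eqn1 tau xi eta w1 w2 w3 w4 w5 w6 (\<lambda>_. 1) (\<lambda>_. 0) (\<lambda>_. 1) (\<lambda>_. 0) (\<lambda>_. f) (\<lambda>_. 0)
     (tu t0 x0 0 U p 0 0 0 0) t0 x0 = 0"
  by (rule HA) (auto simp: eqn1_tu smooth_tu)

lemma F_diff:
  "p * XX t0 x0 U p 0 0 0 0 2
   + (w4 t0 x0 U 1 0 1 0 1 0 - w4 t0 x0 U 1 0 1 0 0 0) * U * p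
   + (w6 t0 x0 U 1 0 1 0 1 0 - w6 t0 x0 U 1 0 1 0 0 0) * U = 0"
proof -
  have e1: "prY_eqn1 tau xi eta w1 w2 w3 w4 w5 w6 (\<lambda>_. 1) (\<lambda>_. 0) (\<lambda>_. 1) (\<lambda>_. 0) (\<lambda>_. 1) (\<lambda>_. 0)
     (tu t0 x0 0 U p 0 0 0 0) t0 x0 = 0" by (rule F_eq)
  have e0: "prY_eqn1 tau xi eta w1 w2 w3 w4 w5 w6 (\<lambda>_. 1) (\<lambda>_. 0) (\<lambda>_. 1) (\<lambda>_. 0) (\<lambda>_. 0) (\<lambda>_. 0)
     (tu t0 x0 0 U p 0 0 0 0) t0 x0 = 0" by (rule F_eq)
  show ?thesis using e1 e0 unfolding prY_tu by (simp add: algebra_simps)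
qed

lemma XX2_comb:
  "2 * XX t0 x0 U 2 0 0 0 0 2 - 3 * XX t0 x0 U 1 0 0 0 0 2 + XX t0 x0 U (-1) 0 0 0 0 2
   = 6 * D2 (D2 (\<lambda>w. eta t0 (fst w) (snd w))) (x0, U)"
  unfolding XX_xi0 by (simp add: Dsimps sl_y3[OF s\<xi>] smooth1_deriv algebra_simps)

lemma eta_uu: "deriv (\<lambda>z. deriv (\<lambda>z'. eta t0 x0 z') z) U = 0"
proof -
  have "D2 (D2 (\<lambda>w. eta t0 (fst w) (snd w))) (x0, U) = 0"
    using F_diff[of 2 t0 x0 U] F_diff[of 1 t0 x0 U] F_diff[of 0 t0 x0 U] F_diff[of "-1" t0 x0 U]
      XX2_comb[of t0 x0 U] by (simp only: ring_distribs mult_zero_left mult_1_left mult_minus_left; linarith)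
  moreover have "D2 (D2 (\<lambda>w. eta t0 (fst w) (snd w))) (x0, U) = deriv (\<lambda>z. D2 (\<lambda>w. eta t0 (fst w) (snd w)) (x0, z)) U"
    using D2_deriv[OF smooth_D2[OF sl_G[OF s\<eta>, where t=t0]], of x0 U] by simp
  moreover have "(\<lambda>z. D2 (\<lambda>w. eta t0 (fst w) (snd w)) (x0, z)) = (\<lambda>z. deriv (\<lambda>z'. eta t0 x0 z') z)"
    using D2_deriv[OF sl_G[OF s\<eta>, where t=t0], of x0] by simp
  ultimately show ?thesis by simp
qed

lemma eta_lin: "eta t x u = eta t x 0 + u * (eta t x 1 - eta t x 0)"
  using affine_of_deriv2[OF sl_z3[OF s\<eta>, where t=t and x=x], of u] eta_uu by simp

end

context dir begin

lemma mem1: "w1 \<in> {w1, w2, w3, w4, w5, w6}" by (rule insertI1)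
lemma mem2: "w2 \<in> {w1, w2, w3, w4, w5, w6}" by (rule insertI2, rule insertI1)
lemma mem3: "w3 \<in> {w1, w2, w3, w4, w5, w6}" by (rule insertI2, rule insertI2, rule insertI1)
lemma mem4: "w4 \<in> {w1, w2, w3, w4, w5, w6}" by (rule insertI2, rule insertI2, rule insertI2, rule insertI1)
lemma mem5: "w5 \<in> {w1, w2, w3, w4, w5, w6}" by (rule insertI2, rule insertI2, rule insertI2, rule insertI2, rule insertI1)
lemma mem6: "w6 \<in> {w1, w2, w3, w4, w5, w6}" by (rule insertI2, rule insertI2, rule insertI2, rule insertI2, rule insertI2, rule insertI1)

lemma E_eq:
  "prY_eqn1 tau xi eta w1 w2 w3 w4 w5 w6 (\<lambda>_. 1) (\<lambda>_. 0) (\<lambda>_. 1) (\<lambda>_. e) (\<lambda>_. 0) (\<lambda>_. 0)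
     (tu t0 x0 (-(e * U * p)) U p 0 0 0 0) t0 x0 = 0"
  by (rule HA) (auto simp: eqn1_tu smooth_tu)

lemma E_diff:
  "- U * p * D2 (\<lambda>w. eta (fst w) x0 (snd w)) (t0, U) + U * p * deriv \<alpha> t0
   + U * p * p * D2 (\<lambda>w. xi (fst w) x0 (snd w)) (t0, U)
   + (w4 t0 x0 U 1 0 1 1 0 0 - w4 t0 x0 U 1 0 1 0 0 0) * U * p + eta t0 x0 U * p
   + U * XX t0 x0 U p 0 0 0 0 1
   + (w6 t0 x0 U 1 0 1 1 0 0 - w6 t0 x0 U 1 0 1 0 0 0) * U = 0"
proof -
  have e1: "prY_eqn1 tau xi eta w1 w2 w3 w4 w5 w6 (\<lambda>_. 1) (\<lambda>_. 0) (\<lambda>_. 1) (\<lambda>_. 1) (\<lambda>_. 0) (\<lambda>_. 0)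
     (tu t0 x0 (-(1 * U * p)) U p 0 0 0 0) t0 x0 = 0" by (rule E_eq)
  have e0: "prY_eqn1 tau xi eta w1 w2 w3 w4 w5 w6 (\<lambda>_. 1) (\<lambda>_. 0) (\<lambda>_. 1) (\<lambda>_. 0) (\<lambda>_. 0) (\<lambda>_. 0)
     (tu t0 x0 (-(0 * U * p)) U p 0 0 0 0) t0 x0 = 0" by (rule E_eq)
  show ?thesis using e1 e0 unfolding prY_tu by (simp add: algebra_simps)
qed

lemma XX1: "XX t0 x0 U p 0 0 0 0 1 = D1 (\<lambda>w. eta t0 (fst w) (snd w)) (x0, U)
   + D2 (\<lambda>w. eta t0 (fst w) (snd w)) (x0, U) * p - deriv (\<lambda>y. xi t0 y 0) x0 * p"
  unfolding XX_xi0 by (simp add: Dsimps algebra_simps)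

lemma idents:
  "D2 (\<lambda>w. eta (fst w) x0 (snd w)) (t0, U) = deriv (\<lambda>z. eta t0 x0 z) U"
  "D2 (\<lambda>w. eta t0 (fst w) (snd w)) (x0, U) = deriv (\<lambda>z. eta t0 x0 z) U"
  "D1 (\<lambda>w. eta t0 (fst w) (snd w)) (x0, U) = deriv (\<lambda>y. eta t0 y U) x0"
  "D2 (\<lambda>w. xi (fst w) x0 (snd w)) (t0, U) = 0"
  "D1 (\<lambda>w. eta (fst w) x0 (snd w)) (t0, U) = deriv (\<lambda>s. eta s x0 U) t0"
  "D1 (\<lambda>w. xi (fst w) x0 (snd w)) (t0, U) = deriv (\<lambda>s. xi s x0 U) t0"
  using D2_deriv[OF sl_H[OF s\<eta>, where x=x0], of t0 U] D2_deriv[OF sl_G[OF s\<eta>, where t=t0], of x0 U]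
    D1_deriv[OF sl_G[OF s\<eta>, where t=t0], of x0 U] D2_deriv[OF sl_H[OF s\<xi>, where x=x0], of t0 U]
    D1_deriv[OF sl_H[OF s\<eta>, where x=x0], of t0 U] D1_deriv[OF sl_H[OF s\<xi>, where x=x0], of t0 U]
    xi_u0 by simp_all

definition dW4 where "dW4 t = w4 t 0 0 1 0 1 1 0 0 - w4 t 0 0 1 0 1 0 0 0"
definition dW6 where "dW6 t = w6 t 0 0 1 0 1 1 0 0 - w6 t 0 0 1 0 1 0 0 0"

lemma E_diff':
  "U * p * deriv \<alpha> t0 + dW4 t0 * U * p + eta t0 x0 U * p
   + U * (deriv (\<lambda>y. eta t0 y U) x0 - deriv (\<lambda>y. xi t0 y 0) x0 * p) + dW6 t0 * U = 0"
proof -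
  have w: "w4 t0 x0 U 1 0 1 1 0 0 = w4 t0 0 0 1 0 1 1 0 0" "w4 t0 x0 U 1 0 1 0 0 0 = w4 t0 0 0 1 0 1 0 0 0"
     "w6 t0 x0 U 1 0 1 1 0 0 = w6 t0 0 0 1 0 1 1 0 0" "w6 t0 x0 U 1 0 1 0 0 0 = w6 t0 0 0 1 0 1 0 0 0"
    by (rule w_indep[OF _ _ mem4]; simp)+ (rule w_indep[OF _ _ mem6]; simp)+
  show ?thesis using E_diff[of U p x0 t0] unfolding XX1 idents w dW4_def dW6_def
    by (simp add: algebra_simps)
qed

lemma eta0: "eta t x 0 = 0"
  using E_diff'[of 0 1 t x] by simp

lemma eta_form1: "eta t x u = u * eta t x 1"
  using eta_lin[of t x u] eta0 by simp

lemma eta_x1: "deriv (\<lambda>y. eta t0 y 1) x0 = 0"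
proof -
  have a: "deriv (\<lambda>y. eta t0 y 1) x0 + dW6 t0 = 0" using E_diff'[of 1 0 t0 x0] by simp
  have b: "deriv (\<lambda>y. eta t0 y 2) x0 + dW6 t0 = 0" using E_diff'[of 2 0 t0 x0] by simp
  have "(\<lambda>y. eta t0 y 2) = (\<lambda>y. 2 * eta t0 y 1)" by (rule ext) (rule eta_form1)
  moreover have "deriv (\<lambda>y. 2 * eta t0 y 1) x0 = 2 * deriv (\<lambda>y. eta t0 y 1) x0"
    by (rule DERIV_imp_deriv) (intro DERIV_cmult smooth1_DERIV sl_y3[OF s\<eta>])
  ultimately show ?thesis using a b by simp
qed

definition n :: "real \<Rightarrow> real" where "n t = eta t 0 1"

lemma eta_form: "eta t x u = u * n t"
  using eta_form1[of t x u] const_of_deriv0[OF sl_y3[OF s\<eta>, where t=t and u=1], of x 0] eta_x1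
  by (simp add: n_def)

lemma sn: "smooth n"
  using sl_s3[OF s\<eta>, of 0 1] by (simp add: n_def[abs_def])

lemma xi_x: "deriv (\<lambda>y. xi t0 y 0) x0 = deriv \<alpha> t0 + dW4 t0 + n t0"
proof -
  have "deriv \<alpha> t0 + dW4 t0 + eta t0 x0 1 + (deriv (\<lambda>y. eta t0 y 1) x0 - deriv (\<lambda>y. xi t0 y 0) x0) + dW6 t0 = 0"
    using E_diff'[of 1 1 t0 x0] by simp
  moreover have "deriv (\<lambda>y. eta t0 y 1) x0 + dW6 t0 = 0" using E_diff'[of 1 0 t0 x0] by simp
  ultimately show ?thesis using eta_form[of t0 x0 1] by simp
qed

definition kk :: "real \<Rightarrow> real" where "kk t = deriv (\<lambda>y. xi t y 0) 0"

lemma xi_form1: "xi t x u = xi t 0 0 + kk t * x"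
proof -
  have "deriv (\<lambda>y. xi t y 0) y = kk t" for y using xi_x[of t y] xi_x[of t 0] by (simp add: kk_def)
  from affine_of_deriv_const[OF sl_y3[OF s\<xi>, where t=t and u=0] this, of x] xi_indep[of t x u]
  show ?thesis by simp
qed

end

lemma fd_lin_fun: "bounded_linear L \<Longrightarrow> frechet_derivative L (at z) = L"
  using frechet_derivative_at[OF bounded_linear.has_derivative[OF _ has_derivative_ident]] by (metis bounded_linear_imp_has_derivative)

lemma D1_fst[simp]: "D1 (\<lambda>w. fst w) = (\<lambda>w. 1)"
  by (rule ext) (simp add: D1_def fd_lin_fun[OF bounded_linear_fst])
lemma D2_fst[simp]: "D2 (\<lambda>w. fst w) = (\<lambda>w. 0)"
  by (rule ext) (simp add: D2_def fd_lin_fun[OF bounded_linear_fst])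
lemma D1_snd[simp]: "D1 (\<lambda>w. snd w) = (\<lambda>w. 0)"
  by (rule ext) (simp add: D1_def fd_lin_fun[OF bounded_linear_snd])
lemma D2_snd[simp]: "D2 (\<lambda>w. snd w) = (\<lambda>w. 1)"
  by (rule ext) (simp add: D2_def fd_lin_fun[OF bounded_linear_snd])

context dir begin

lemma Z_eq:
  "prY_eqn1 tau xi eta w1 w2 w3 w4 w5 w6 (\<lambda>_. 1) (\<lambda>_. 0) (\<lambda>_. 1) (\<lambda>_. 0) (\<lambda>_. 0) (\<lambda>_. 0)
     (tu t0 x0 0 0 1 0 0 0 0) t0 x0 = 0"
  by (rule HA) (auto simp: eqn1_tu smooth_tu)

lemma XX5_zero: "XX t0 x0 0 1 0 0 0 0 5 = 0"
proof -
  have "(\<lambda>w. eta t0 (fst w) (snd w) - xi t0 (fst w) (snd w) * qp x0 1 0 0 0 0 0 (fst w)) =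
        (\<lambda>w. snd w * n t0 - (xi t0 0 0 + kk t0 * fst w) * 1)"
  proof
    fix w show "eta t0 (fst w) (snd w) - xi t0 (fst w) (snd w) * qp x0 1 0 0 0 0 0 (fst w) =
        snd w * n t0 - (xi t0 0 0 + kk t0 * fst w) * 1"
      by (simp only: eta_form[of t0 "fst w" "snd w"] xi_form1[of t0 "fst w" "snd w"] qp_const)
  qed
  thus ?thesis unfolding XX_def
    by (simp add: Dop_def numeral_eq_Suc smooth_add smooth_mult smooth_diff smooth_fst smooth_snd smooth_D1 smooth_D2)
qed

lemma xi_t0: "deriv (\<lambda>s. xi s x0 0) t0 = 0"
proof -
  have e: "(\<lambda>s. eta s x0 0) = (\<lambda>s. 0)" using eta0 by auto
  show ?thesis using Z_eq[of t0 x0] unfolding prY_tu idents XX5_zero by (simp add: e)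
qed

definition c1 where "c1 = kk 0"
definition c2 where "c2 = xi 0 0 0"

lemma xi_form: "xi t x u = c1 * x + c2"
proof -
  have "xi t x u = xi t x 0" by (rule xi_indep)
  also have "\<dots> = xi 0 x 0" using const_of_deriv0[OF sl_s3[OF s\<xi>, where x=x and u=0], of t 0] xi_t0 by blast
  also have "\<dots> = c1 * x + c2" using xi_form1[of 0 x 0] by (simp add: c1_def c2_def)
  finally show ?thesis .
qed

definition r where "r t = n t - c1 / 2"

lemma sr: "smooth r" unfolding r_def[abs_def] using sn by (intro smooth_diff smooth_const)

lemma eta_form': "eta t x u = c1 / 2 * u + r t * u"
  by (simp add: eta_form r_def algebra_simps)

sublocale F: forms \<alpha> r c1 c2 tau xi eta
  by unfold_locales (auto simp: s\<alpha> sr tau_eq xi_form eta_form')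

end

context dir begin

lemma W_test:
  assumes a: "a \<noteq> 0" and c: "c \<noteq> 0"
  shows "(w1 tt xx ja a b c e f q - (5 * c1 * a - deriv \<alpha> tt * a)) * jf
    + (w2 tt xx ja a b c e f q - (3 * c1 * b - deriv \<alpha> tt * b)) * jd
    + (w3 tt xx ja a b c e f q - (5 / 2 * c1 * c - deriv \<alpha> tt * c - r tt * c)) * ja * jd
    + (w4 tt xx ja a b c e f q - (c1 / 2 * e - deriv \<alpha> tt * e - r tt * e)) * ja * jb
    + (w5 tt xx ja a b c e f q - (5 / 2 * c1 * f - deriv \<alpha> tt * f - r tt * f)) * jb * jc
    + (w6 tt xx ja a b c e f q - (- deriv \<alpha> tt * q - deriv r tt)) * ja = 0"
proof -
  define v where "v = -(a * jf + b * jd + c * ja * jd + e * ja * jb + f * jb * jc + q * ja)"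
  have h: "prY_eqn1 tau xi eta w1 w2 w3 w4 w5 w6 (\<lambda>_. a) (\<lambda>_. b) (\<lambda>_. c) (\<lambda>_. e) (\<lambda>_. f) (\<lambda>_. q)
     (tu tt xx v ja jb jc jd je jf) tt xx = 0"
    by (rule HA) (auto simp: eqn1_tu smooth_tu a c v_def)
  have e: "eqn1 (\<lambda>_. a) (\<lambda>_. b) (\<lambda>_. c) (\<lambda>_. e) (\<lambda>_. f) (\<lambda>_. q) (tu tt xx v ja jb jc jd je jf) tt xx = 0"
    by (simp add: eqn1_tu v_def)
  show ?thesis using h unfolding F.prY_eq[OF smooth_tu] e by (simp add: tu_pdxn tu_def)
qed

lemma wnorm: "a \<noteq> 0 \<Longrightarrow> c \<noteq> 0 \<Longrightarrow> w t x u a b c e f q = w t 0 0 a b c e f q \<Longrightarrow> w t x' u' a b c e f q = w t 0 0 a b c e f q \<Longrightarrow>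
  w t x u a b c e f q = w t x' u' a b c e f q" by simp

lemma w_nz:
  assumes a: "a \<noteq> 0" and c: "c \<noteq> 0"
  shows "w1 t x u a b c e f q = 5 * c1 * a - deriv \<alpha> t * a"
    "w2 t x u a b c e f q = 3 * c1 * b - deriv \<alpha> t * b"
    "w3 t x u a b c e f q = 5 / 2 * c1 * c - deriv \<alpha> t * c - r t * c"
    "w4 t x u a b c e f q = c1 / 2 * e - deriv \<alpha> t * e - r t * e"
    "w5 t x u a b c e f q = 5 / 2 * c1 * f - deriv \<alpha> t * f - r t * f"
    "w6 t x u a b c e f q = - deriv \<alpha> t * q - deriv r t"
proof -
  have i1: "w1 t x u a b c e f q = w1 t 0 0 a b c e f q" by (rule w_indep[OF a c mem1])
  have i2: "w2 t x u a b c e f q = w2 t 0 0 a b c e f q" by (rule w_indep[OF a c mem2])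
  have i3: "w3 t x u a b c e f q = w3 t 0 0 a b c e f q" by (rule w_indep[OF a c mem3])
  have i4: "w4 t x u a b c e f q = w4 t 0 0 a b c e f q" by (rule w_indep[OF a c mem4])
  have i5: "w5 t x u a b c e f q = w5 t 0 0 a b c e f q" by (rule w_indep[OF a c mem5])
  have i6: "w6 t x u a b c e f q = w6 t 0 0 a b c e f q" by (rule w_indep[OF a c mem6])
  have j3: "w3 t 0 1 a b c e f q = w3 t 0 0 a b c e f q" by (rule w_indep[OF a c mem3])
  have j4: "w4 t 0 1 a b c e f q = w4 t 0 0 a b c e f q" by (rule w_indep[OF a c mem4])
  have j6: "w6 t 0 1 a b c e f q = w6 t 0 0 a b c e f q" by (rule w_indep[OF a c mem6])
  have j2: "w2 t 0 1 a b c e f q = w2 t 0 0 a b c e f q" by (rule w_indep[OF a c mem2])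
  have W6: "w6 t 0 0 a b c e f q = - deriv \<alpha> t * q - deriv r t"
    using W_test[OF a c, where b=b and e=e and f=f and q=q and tt=t and xx=0 and ja=1 and jb=0 and jc=0 and jd=0 and jf=0] j6 by simp
  have W4: "w4 t 0 0 a b c e f q = c1 / 2 * e - deriv \<alpha> t * e - r t * e"
    using W_test[OF a c, where b=b and e=e and f=f and q=q and tt=t and xx=0 and ja=1 and jb=1 and jc=0 and jd=0 and jf=0] j6 j4 W6 by simp
  have W5: "w5 t 0 0 a b c e f q = 5 / 2 * c1 * f - deriv \<alpha> t * f - r t * f"
    using W_test[OF a c, where b=b and e=e and f=f and q=q and tt=t and xx=0 and ja=0 and jb=1 and jc=1 and jd=0 and jf=0] by simp
  have W2: "w2 t 0 0 a b c e f q = 3 * c1 * b - deriv \<alpha> t * b"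
    using W_test[OF a c, where b=b and e=e and f=f and q=q and tt=t and xx=0 and ja=0 and jb=0 and jc=0 and jd=1 and jf=0] by simp
  have W3: "w3 t 0 0 a b c e f q = 5 / 2 * c1 * c - deriv \<alpha> t * c - r t * c"
    using W_test[OF a c, where b=b and e=e and f=f and q=q and tt=t and xx=0 and ja=1 and jb=0 and jc=0 and jd=1 and jf=0] j2 j3 j6 W2 W6 by simp
  have W1: "w1 t 0 0 a b c e f q = 5 * c1 * a - deriv \<alpha> t * a"
    using W_test[OF a c, where b=b and e=e and f=f and q=q and tt=t and xx=0 and ja=0 and jb=0 and jc=0 and jd=0 and jf=1] by simp
  show "w1 t x u a b c e f q = 5 * c1 * a - deriv \<alpha> t * a" using i1 W1 by simp
  show "w2 t x u a b c e f q = 3 * c1 * b - deriv \<alpha> t * b" using i2 W2 by simp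
  show "w3 t x u a b c e f q = 5 / 2 * c1 * c - deriv \<alpha> t * c - r t * c" using i3 W3 by simp
  show "w4 t x u a b c e f q = c1 / 2 * e - deriv \<alpha> t * e - r t * e" using i4 W4 by simp
  show "w5 t x u a b c e f q = 5 / 2 * c1 * f - deriv \<alpha> t * f - r t * f" using i5 W5 by simp
  show "w6 t x u a b c e f q = - deriv \<alpha> t * q - deriv r t" using i6 W6 by simp
qed

end

lemma ext_ac:
  fixes g :: "real \<Rightarrow> real \<Rightarrow> real"
  assumes sw: "sm9 w"
    and eq: "\<And>a c. a \<noteq> 0 \<Longrightarrow> c \<noteq> 0 \<Longrightarrow> w t x u a b c e f q = g a c"
    and ga: "\<And>c. continuous_on UNIV (\<lambda>a. g a c)" and gc: "\<And>a. continuous_on UNIV (\<lambda>c. g a c)"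
  shows "w t x u a b c e f q = g a c"
proof -
  have s1: "w t x u a' b c' e f q = g a' c'" if c': "c' \<noteq> 0" for a' c'
    by (rule ext0[OF smooth_cont[OF sl9_a[OF sw]] ga]) (rule eq[OF _ c'])
  show ?thesis
    by (rule ext0[OF smooth_cont[OF sl9_c[OF sw]] gc]) (rule s1)
qed

context dir begin

lemma w_all1: "w1 t x u A B C E F Q = 5 * c1 * A - deriv \<alpha> t * A"
  apply (rule ext_ac[OF sw1, where g="\<lambda>A C. 5 * c1 * A - deriv \<alpha> t * A"])
    apply (rule w_nz(1), assumption, assumption)
   apply (intro continuous_intros)+
  done

lemma w_all2: "w2 t x u A B C E F Q = 3 * c1 * B - deriv \<alpha> t * B"
  apply (rule ext_ac[OF sw2, where g="\<lambda>A C. 3 * c1 * B - deriv \<alpha> t * B"])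
    apply (rule w_nz(2), assumption, assumption)
   apply (intro continuous_intros)+
  done

lemma w_all3: "w3 t x u A B C E F Q = 5 / 2 * c1 * C - deriv \<alpha> t * C - r t * C"
  apply (rule ext_ac[OF sw3, where g="\<lambda>A C. 5 / 2 * c1 * C - deriv \<alpha> t * C - r t * C"])
    apply (rule w_nz(3), assumption, assumption)
   apply (intro continuous_intros)+
  done

lemma w_all4: "w4 t x u A B C E F Q = c1 / 2 * E - deriv \<alpha> t * E - r t * E"
  apply (rule ext_ac[OF sw4, where g="\<lambda>A C. c1 / 2 * E - deriv \<alpha> t * E - r t * E"])
    apply (rule w_nz(4), assumption, assumption)
   apply (intro continuous_intros)+
  done

lemma w_all5: "w5 t x u A B C E F Q = 5 / 2 * c1 * F - deriv \<alpha> t * F - r t * F"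
  apply (rule ext_ac[OF sw5, where g="\<lambda>A C. 5 / 2 * c1 * F - deriv \<alpha> t * F - r t * F"])
    apply (rule w_nz(5), assumption, assumption)
   apply (intro continuous_intros)+
  done

lemma w_all6: "w6 t x u A B C E F Q = - deriv \<alpha> t * Q - deriv r t"
  apply (rule ext_ac[OF sw6, where g="\<lambda>A C. - deriv \<alpha> t * Q - deriv r t"])
    apply (rule w_nz(6), assumption, assumption)
   apply (intro continuous_intros)+
  done

lemmas w_all = w_all1 w_all2 w_all3 w_all4 w_all5 w_all6

end

theorem mainTheorem1:
  fixes tau xi eta :: "real \<Rightarrow> real \<Rightarrow> real \<Rightarrow> real"
    and w1 w2 w3 w4 w5 w6 :: "real \<Rightarrow> real \<Rightarrow> real \<Rightarrow> real \<Rightarrow> real \<Rightarrow> real \<Rightarrow> real \<Rightarrow> real \<Rightarrow> real \<Rightarrow> real"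
  assumes "smooth (\<lambda>(t::real, x::real, u::real). tau t x u)"
    and "smooth (\<lambda>(t::real, x::real, u::real). xi t x u)"
    and "smooth (\<lambda>(t::real, x::real, u::real). eta t x u)"
    and "\<forall>w \<in> {w1, w2, w3, w4, w5, w6}.
           smooth (\<lambda>(t::real, x::real, u::real, a::real, b::real, c::real, e::real, f::real, q::real).
                      w t x u a b c e f q)"
  shows "inf_equiv_transf tau xi eta w1 w2 w3 w4 w5 w6 \<longleftrightarrow>
    (\<exists>(c1::real) (c2::real) (\<alpha>::real \<Rightarrow> real) (r::real \<Rightarrow> real). smooth \<alpha> \<and> smooth r \<and>
       (\<forall>t x u A B C E F Q.
          tau t x u = \<alpha> t \<and>
          xi t x u = c1 * x + c2 \<and>
          eta t x u = c1 / 2 * u + r t * u \<and>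
          w1 t x u A B C E F Q = 5 * c1 * A - deriv \<alpha> t * A \<and>
          w2 t x u A B C E F Q = 3 * c1 * B - deriv \<alpha> t * B \<and>
          w3 t x u A B C E F Q = 5 / 2 * c1 * C - deriv \<alpha> t * C - r t * C \<and>
          w4 t x u A B C E F Q = c1 / 2 * E - deriv \<alpha> t * E - r t * E \<and>
          w5 t x u A B C E F Q = 5 / 2 * c1 * F - deriv \<alpha> t * F - r t * F \<and>
          w6 t x u A B C E F Q = - deriv \<alpha> t * Q - deriv r t))"
proof
  have sw1: "sm9 w1" by (rule bspec[OF assms(4)]) (rule insertI1)
  have sw2: "sm9 w2" by (rule bspec[OF assms(4)]) (rule insertI2, rule insertI1)
  have sw3: "sm9 w3" by (rule bspec[OF assms(4)]) (rule insertI2, rule insertI2, rule insertI1)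
  have sw4: "sm9 w4" by (rule bspec[OF assms(4)]) (rule insertI2, rule insertI2, rule insertI2, rule insertI1)
  have sw5: "sm9 w5" by (rule bspec[OF assms(4)]) (rule insertI2, rule insertI2, rule insertI2, rule insertI2, rule insertI1)
  have sw6: "sm9 w6" by (rule bspec[OF assms(4)]) (rule insertI2, rule insertI2, rule insertI2, rule insertI2, rule insertI2, rule insertI1)
  assume H: "inf_equiv_transf tau xi eta w1 w2 w3 w4 w5 w6"
  interpret D: dir tau xi eta w1 w2 w3 w4 w5 w6
    by unfold_locales (use assms(1-3) sw1 sw2 sw3 sw4 sw5 sw6 H in auto)
  show "\<exists>(c1::real) (c2::real) (\<alpha>::real \<Rightarrow> real) (r::real \<Rightarrow> real). smooth \<alpha> \<and> smooth r \<and>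
       (\<forall>t x u A B C E F Q.
          tau t x u = \<alpha> t \<and>
          xi t x u = c1 * x + c2 \<and>
          eta t x u = c1 / 2 * u + r t * u \<and>
          w1 t x u A B C E F Q = 5 * c1 * A - deriv \<alpha> t * A \<and>
          w2 t x u A B C E F Q = 3 * c1 * B - deriv \<alpha> t * B \<and>
          w3 t x u A B C E F Q = 5 / 2 * c1 * C - deriv \<alpha> t * C - r t * C \<and>
          w4 t x u A B C E F Q = c1 / 2 * E - deriv \<alpha> t * E - r t * E \<and>
          w5 t x u A B C E F Q = 5 / 2 * c1 * F - deriv \<alpha> t * F - r t * F \<and>
          w6 t x u A B C E F Q = - deriv \<alpha> t * Q - deriv r t)"
    apply (rule exI[of _ D.c1], rule exI[of _ D.c2], rule exI[of _ D.\<alpha>], rule exI[of _ D.r])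
    using D.s\<alpha> D.sr D.tau_eq D.xi_form D.eta_form' D.w_all by simp
next
  assume "\<exists>(c1::real) (c2::real) (\<alpha>::real \<Rightarrow> real) (r::real \<Rightarrow> real). smooth \<alpha> \<and> smooth r \<and>
       (\<forall>t x u A B C E F Q.
          tau t x u = \<alpha> t \<and>
          xi t x u = c1 * x + c2 \<and>
          eta t x u = c1 / 2 * u + r t * u \<and>
          w1 t x u A B C E F Q = 5 * c1 * A - deriv \<alpha> t * A \<and>
          w2 t x u A B C E F Q = 3 * c1 * B - deriv \<alpha> t * B \<and>
          w3 t x u A B C E F Q = 5 / 2 * c1 * C - deriv \<alpha> t * C - r t * C \<and>
          w4 t x u A B C E F Q = c1 / 2 * E - deriv \<alpha> t * E - r t * E \<and>
          w5 t x u A B C E F Q = 5 / 2 * c1 * F - deriv \<alpha> t * F - r t * F \<and>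
          w6 t x u A B C E F Q = - deriv \<alpha> t * Q - deriv r t)"
  then obtain c1 c2 \<alpha> r where sa: "smooth \<alpha>" and sr: "smooth r" and all: "\<forall>t x u A B C E F Q.
          tau t x u = \<alpha> t \<and>
          xi t x u = c1 * x + c2 \<and>
          eta t x u = c1 / 2 * u + r t * u \<and>
          w1 t x u A B C E F Q = 5 * c1 * A - deriv \<alpha> t * A \<and>
          w2 t x u A B C E F Q = 3 * c1 * B - deriv \<alpha> t * B \<and>
          w3 t x u A B C E F Q = 5 / 2 * c1 * C - deriv \<alpha> t * C - r t * C \<and>
          w4 t x u A B C E F Q = c1 / 2 * E - deriv \<alpha> t * E - r t * E \<and>
          w5 t x u A B C E F Q = 5 / 2 * c1 * F - deriv \<alpha> t * F - r t * F \<and>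
          w6 t x u A B C E F Q = - deriv \<alpha> t * Q - deriv r t" by blast
  have T: "\<And>t x u. tau t x u = \<alpha> t" and X: "\<And>t x u. xi t x u = c1 * x + c2"
    and Et: "\<And>t x u. eta t x u = c1 / 2 * u + r t * u" using all by blast+
  have W: "\<And>t x u A B C E F Q. w1 t x u A B C E F Q = 5 * c1 * A - deriv \<alpha> t * A"
     "\<And>t x u A B C E F Q. w2 t x u A B C E F Q = 3 * c1 * B - deriv \<alpha> t * B"
     "\<And>t x u A B C E F Q. w3 t x u A B C E F Q = 5 / 2 * c1 * C - deriv \<alpha> t * C - r t * C"
     "\<And>t x u A B C E F Q. w4 t x u A B C E F Q = c1 / 2 * E - deriv \<alpha> t * E - r t * E"
     "\<And>t x u A B C E F Q. w5 t x u A B C E F Q = 5 / 2 * c1 * F - deriv \<alpha> t * F - r t * F"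
     "\<And>t x u A B C E F Q. w6 t x u A B C E F Q = - deriv \<alpha> t * Q - deriv r t"
    using all by blast+
  interpret Fm: forms \<alpha> r c1 c2 tau xi eta
    by unfold_locales (use sa sr T X Et in auto)
  show "inf_equiv_transf tau xi eta w1 w2 w3 w4 w5 w6"
    unfolding inf_equiv_transf_def
  proof (intro allI impI conjI)
    fix A B C E F Q u t x
    assume h: "smooth (\<lambda>(p::real\<times>real). u (fst p) (snd p)) \<and> A t \<noteq> 0 \<and> C t \<noteq> 0 \<and> eqn1 A B C E F Q u t x = 0"
    have su: "smooth (U2 u)" using h by (simp add: U2_def)
    show "prY_eqn1 tau xi eta w1 w2 w3 w4 w5 w6 A B C E F Q u t x = 0"
      unfolding Fm.prY_eq[OF su] using h by (simp add: W)
  next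
    fix A B C E F Q :: "real \<Rightarrow> real" and t x u
    assume "A t \<noteq> 0 \<and> C t \<noteq> 0"
    show "\<forall>(w, theta)\<in>{(w1, A), (w2, B), (w3, C), (w4, E), (w5, F), (w6, Q)}.
            om_x tau w theta A B C E F Q t x u = 0 \<and> om_u tau w theta A B C E F Q t x u = 0"
      by (simp add: om_x_def om_u_def W T)
  qed
qed


end
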